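(* Under the setup in the context (fixed, undirected, connected graph), there is a constant $C\ge 0$, independent of $t$, such that for all integers $t\ge t_0+2$, $$V(t)\le\Big(1-\frac{\gamma\lambda_2}{t}\Big)V(t-1)+\frac{\gamma\lambda_G}{t\lambda_2}R(t-1)+\frac{C}{t^2}.$$
   Context: Fix integers $n\ge 2$ and $N\ge 2$. Let $a_1,\dots,a_n\in\mathbb{R}$, let $A\in\mathbb{R}^{n\times n}$ be the matrix with $A_{k,k+1}=1$ for $k=1,\dots,n-1$, last row $(a_1,a_2,\dots,a_n)$, and all other entries $0$, and let $B=(0,\dots,0,1)^T\in\mathbb{R}^n$. There are $N$ agents with dynamics $x_i(t+1)=Ax_i(t)+Bu_i(t)$, $i=1,\dots,N$, where $x_i(t)=(x_{i1}(t),\dots,x_{in}(t))^T\in\mathbb{R}^n$ and $u_i(t)\in\mathbb{R}$; write $\bar x(t)=\frac1N\sum_{i=1}^N x_i(t)$. Communication graph: $G$ is a fixed, undirected, connected graph on $\{1,\dots,N\}$; $N_i$ is the neighbor set of agent $i$, $d_i=|N_i|$, $d_{\max}=\max_i d_i$, and $L$ is the Laplacian of $G$ (degree matrix minus adjacency matrix), with eigenvalues $0=\lambda_1<\lambda_2\le\dots\le\lambda_N$. Gains: real numbers $b_1,\dots,b_{n-1}$ (compression coefficients), $K_2=[b_1,\dots,b_{n-1},1]\in\mathbb R^{1\times n}$, and $K_1=[-a_1+b_1,\,-a_2+b_2-b_1,\,\dots,\,-a_{n-1}+b_{n-1}-b_{n-2},\,-a_n-b_{n-1}+1]\in\mathbb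 R^{1\times n}$. Communication: for every ordered pair $(i,j)$ with $j\in N_i$ and every integer $t$, agent $i$ receives the bit $s_{ij}(t)=1$ if $K_2x_j(t)+d_{ij}(t)\le c_{ij}$ and $s_{ij}(t)=0$ otherwise, where $c_{ij}\in\mathbb R$ are fixed thresholds and the noises $\{d_{ij}(t)\}$ are i.i.d. $N(0,\sigma^2)$, $\sigma>0$, over all $i,j,t$; $F$ and $f$ denote the distribution function and density of $N(0,\sigma^2)$. Algorithm: fix $\beta>0$, $\gamma>0$, an integer $t_0>\gamma d_{\max}-1$, deterministic initial states $x_i(t_0+1)=x_i^0$ and deterministic initial estimates $\hat z_{ij}(t_0)=\hat z_{ij}^0$, and $M>0$ with $|K_2x_i^0|\le M$ and $|\hat z^0_{ij}|\le M$ for all $i$ and $j\in N_i$. Let $\Pi_M(\zeta)=\max\{-M,\min\{M,\zeta\}\}$ (projection onto $[-M,M]$). For $t\ge t_0+1$, for all $i$ and $j\in N_i$: $\hat z_{ij}(t)=\Pi_M\big(\hat z_{ij}(t-1)+\tfrac{\beta}{t}(F(c_{ij}-\hat z_{ij}(t-1))-s_{ij}(t))\big)$, and $u_i(t)=K_1x_i(t)+\frac{\gamma}{t+1}\sum_{j\in N_i}(\hat z_{ij}(t)-K_2x_i(t))$. Constants and Lyapunov functions: enumerate the $d=\sum_i d_i$ ordered pairs $(i,j)$ with $j\in N_i$ as $p=1,\dots,d$. Let $W\in\mathbb R^{N\times d}$ with $W_{k,p}=1$ if pair $p$ has first component $k$ and $0$ otherwise; $Q\in\mathbb R^{d\times N}$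 with $Q_{p,k}=1$ if pair $p$ has second component $k$ and $0$ otherwise; $J_N=I_N-\frac1N\mathbf 1_N\mathbf 1_N^T$. With $\|\cdot\|$ the spectral norm, set $\lambda_G=\|J_NW\|^2$, $\lambda_{QW}=\|QW\|^2$, $\lambda_{QL}=\|QL\|^2$, $\alpha=2\sqrt{\lambda_{QW}}+\lambda_{QL}\lambda_2/\lambda_G$, and $f_M=\min_{(i,j):\,j\in N_i} f(|c_{ij}|+M)$. Define $V(t)=\sum_{i=1}^N E\big[(K_2x_i(t)-K_2\bar x(t))^2\big]$ and $R(t)=\sum_{i=1}^N\sum_{j\in N_i}E\big[(\hat z_{ij}(t)-K_2x_j(t))^2\big]$. *)

theory Defs
  imports "HOL-Probability.Probability" "Jordan_Normal_Form.Char_Poly"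
begin

(* Agents are 0,...,N-1; state components are 1,...,n (a state is a function nat => real,
   only its values at 1..n matter). *)

definition nbrs :: "(nat \<Rightarrow> nat \<Rightarrow> bool) \<Rightarrow> nat \<Rightarrow> nat \<Rightarrow> nat set" where
  "nbrs E N i = {j. j < N \<and> E i j}"

definition dmax :: "(nat \<Rightarrow> nat \<Rightarrow> bool) \<Rightarrow> nat \<Rightarrow> nat" where
  "dmax E N = Max ((\<lambda>i. card (nbrs E N i)) ` {..<N})"

definition undirected_connected_graph :: "(nat \<Rightarrow> nat \<Rightarrow> bool) \<Rightarrow> nat \<Rightarrow> bool" where
  "undirected_connected_graph E N \<longleftrightarrow>
     (\<forall>i j. E i j \<longrightarrow> i < N \<and> j < N) \<and> (\<forall>i j. E i j \<longrightarrow> E j i) \<and> (\<forall>i. \<not> E i i) \<and>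
     (\<forall>i<N. \<forall>j<N. E\<^sup>*\<^sup>* i j)"

definition pairs :: "(nat \<Rightarrow> nat \<Rightarrow> bool) \<Rightarrow> nat \<Rightarrow> (nat \<times> nat) set" where
  "pairs E N = {(i, j). i < N \<and> j \<in> nbrs E N i}"

definition laplacian :: "(nat \<Rightarrow> nat \<Rightarrow> bool) \<Rightarrow> nat \<Rightarrow> real mat" where
  "laplacian E N = mat N N (\<lambda>(i, j). if i = j then real (card (nbrs E N i))
                                         else if E i j then -1 else 0)"

(* eigenvalues (with multiplicity) listed in increasing order; lambda_k = entry k-1 *)
definition sorted_eigenvalues :: "real mat \<Rightarrow> real list" where
  "sorted_eigenvalues A = sorted_list_of_multiset (proots (char_poly A))"

definition lambda2 :: "(nat \<Rightarrow> nat \<Rightarrow> bool) \<Rightarrow> nat \<Rightarrow> real" where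
  "lambda2 E N = sorted_eigenvalues (laplacian E N) ! 1"

definition spec_norm :: "'r set \<Rightarrow> 'c set \<Rightarrow> ('r \<Rightarrow> 'c \<Rightarrow> real) \<Rightarrow> real" where
  "spec_norm Rw Cl A = Sup {sqrt (\<Sum>r\<in>Rw. (\<Sum>c\<in>Cl. A r c * v c)\<^sup>2) | v. (\<Sum>c\<in>Cl. (v c)\<^sup>2) \<le> 1}"

definition Wmat :: "nat \<Rightarrow> nat \<times> nat \<Rightarrow> real" where
  "Wmat k p = (if fst p = k then 1 else 0)"

definition JN :: "nat \<Rightarrow> nat \<Rightarrow> nat \<Rightarrow> real" where
  "JN N k l = (if k = l then 1 else 0) - 1 / real N"

definition lambdaG :: "(nat \<Rightarrow> nat \<Rightarrow> bool) \<Rightarrow> nat \<Rightarrow> real" where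
  "lambdaG E N = (spec_norm {..<N} (pairs E N)
       (\<lambda>k p. \<Sum>l<N. JN N k l * Wmat l p))\<^sup>2"

definition normal_cdf :: "real \<Rightarrow> real \<Rightarrow> real" where
  "normal_cdf \<sigma> y = measure (density lborel (normal_density 0 \<sigma>)) {..y}"

definition proj :: "real \<Rightarrow> real \<Rightarrow> real" where
  "proj Mb \<zeta> = max (- Mb) (min Mb \<zeta>)"

definition K2 :: "nat \<Rightarrow> (nat \<Rightarrow> real) \<Rightarrow> nat \<Rightarrow> real" where
  "K2 n b k = (if k = n then 1 else b k)"

definition K1 :: "nat \<Rightarrow> (nat \<Rightarrow> real) \<Rightarrow> (nat \<Rightarrow> real) \<Rightarrow> nat \<Rightarrow> real" where
  "K1 n a b k = (if k = 1 then - a 1 + b 1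
                 else if k = n then - a n - b (n - 1) + 1
                 else - a k + b k - b (k - 1))"

definition rowmul :: "nat \<Rightarrow> (nat \<Rightarrow> real) \<Rightarrow> (nat \<Rightarrow> real) \<Rightarrow> real" where
  "rowmul n K v = (\<Sum>k=1..n. K k * v k)"

(* x(t+1) = A x(t) + B u(t), A companion matrix with last row a, B = e_n *)
definition sys_step :: "nat \<Rightarrow> (nat \<Rightarrow> real) \<Rightarrow> (nat \<Rightarrow> real) \<Rightarrow> real \<Rightarrow> nat \<Rightarrow> real" where
  "sys_step n a v w k = (if k < n then v (k + 1) else (\<Sum>l=1..n. a l * v l) + w)"

end

theory Submission
  imports Defs
begin


definition Lf :: "(nat \<Rightarrow> nat \<Rightarrow> bool) \<Rightarrow> nat \<Rightarrow> (nat \<Rightarrow> real) \<Rightarrow> nat \<Rightarrow> real" where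
  "Lf E N v i = (\<Sum>j<N. (if E i j then 1 else 0) * (v i - v j))"

definition Qf :: "(nat \<Rightarrow> nat \<Rightarrow> bool) \<Rightarrow> nat \<Rightarrow> (nat \<Rightarrow> real) \<Rightarrow> real" where
  "Qf E N v = (\<Sum>i<N. v i * Lf E N v i)"

context
  fixes E :: "nat \<Rightarrow> nat \<Rightarrow> bool" and N :: nat
  assumes sym: "\<And>i j. E i j \<Longrightarrow> E j i"
begin

lemma bilin:
  "(\<Sum>i<N. w i * Lf E N v i) =
     (1/2) * (\<Sum>i<N. \<Sum>j<N. (if E i j then 1 else 0) * ((w i - w j) * (v i - v j)))"
proof -
  let ?c = "\<lambda>i j. (if E i j then 1 else 0::real)"
  have c: "?c i j = ?c j i" for i j using sym by auto
  have A: "(\<Sum>i<N. w i * Lf E N v i) = (\<Sum>i<N. \<Sum>j<N. ?c i j * (w i * (v i - v j)))"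
    unfolding Lf_def by (simp add: sum_distrib_left algebra_simps)
  have B: "(\<Sum>i<N. \<Sum>j<N. ?c i j * (w j * (v j - v i))) = (\<Sum>i<N. \<Sum>j<N. ?c i j * (w i * (v i - v j)))"
    by (subst sum.swap) (simp add: c)
  have "(\<Sum>i<N. \<Sum>j<N. ?c i j * ((w i - w j) * (v i - v j))) =
        (\<Sum>i<N. \<Sum>j<N. ?c i j * (w i * (v i - v j))) + (\<Sum>i<N. \<Sum>j<N. ?c i j * (w j * (v j - v i)))"
    by (simp add: sum.distrib[symmetric] algebra_simps)
  with A B show ?thesis by simp
qed

lemma Qf_half:
  "Qf E N v = (1/2) * (\<Sum>i<N. \<Sum>j<N. (if E i j then 1 else 0) * (v i - v j)^2)"
  using bilin[of v v] unfolding Qf_def by (simp add: power2_eq_square)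

lemma Qf_nonneg: "Qf E N v \<ge> 0"
  unfolding Qf_half by (intro mult_nonneg_nonneg sum_nonneg) auto

lemma Lf_sym: "(\<Sum>i<N. w i * Lf E N v i) = (\<Sum>i<N. v i * Lf E N w i)"
  using bilin[of w v] bilin[of v w] by (simp add: algebra_simps)

lemma Lf_sum0: "(\<Sum>i<N. Lf E N v i) = 0"
  using bilin[of "\<lambda>_. 1" v] by simp

end

lemma Qf_zero_const:
  assumes g: "undirected_connected_graph E N" and Q: "Qf E N v = 0"
    and i: "i < N" and j: "j < N"
  shows "v i = v j"
proof -
  have sym: "\<And>i j. E i j \<Longrightarrow> E j i" and bnd: "\<And>i j. E i j \<Longrightarrow> i < N \<and> j < N"
    and conn: "E\<^sup>*\<^sup>* i j" using g i j unfolding undirected_connected_graph_def by auto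
  have "(\<Sum>i<N. \<Sum>j<N. (if E i j then 1 else 0) * (v i - v j)^2) = 0"
    using Q Qf_half[of E, OF sym] by simp
  hence "\<forall>i\<in>{..<N}. (\<Sum>j<N. (if E i j then 1 else 0) * (v i - v j)^2) = 0"
    by (subst sum_nonneg_eq_0_iff[symmetric]) (auto intro!: sum_nonneg)
  hence edge: "E a b \<Longrightarrow> v a = v b" for a b
    using bnd[of a b] by (force simp: sum_nonneg_eq_0_iff)
  from conn show ?thesis
    by (induction rule: rtranclp_induct) (auto dest: edge)
qed



lemma lap_carrier: "laplacian E N \<in> carrier_mat N N"
  unfolding laplacian_def by simp

lemma card_nbrs_sum: "real (card (nbrs E N i)) = (\<Sum>j<N. if E i j then 1 else 0)"
proof -
  have e: "nbrs E N i = {j\<in>{..<N}. E i j}" unfolding nbrs_def by auto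
  have "(\<Sum>j<N. if E i j then 1 else 0::real) = (\<Sum>j\<in>{j\<in>{..<N}. E i j}. 1)"
    by (rule sum.inter_filter[symmetric]) simp
  also have "\<dots> = real (card (nbrs E N i))" unfolding e by simp
  finally show ?thesis by simp
qed

lemma lap_row:
  assumes irr: "\<not> E i i" and i: "i < N"
  shows "(\<Sum>j<N. laplacian E N $$ (i,j) * f j) = Lf E N f i"
proof -
  have "(\<Sum>j<N. laplacian E N $$ (i,j) * f j) =
        (\<Sum>j<N. (if i = j then real (card (nbrs E N i)) * f j else 0)) - (\<Sum>j<N. (if E i j then 1 else 0) * f j)"
    unfolding laplacian_def sum_subtractf[symmetric] using i irr
    by (intro sum.cong) auto
  also have "(\<Sum>j<N. (if i = j then real (card (nbrs E N i)) * f j else 0)) = real (card (nbrs E N i)) * f i"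
    using i by (simp add: sum.delta)
  also have "\<dots> = (\<Sum>j<N. (if E i j then 1 else 0) * f i)"
    unfolding card_nbrs_sum by (simp add: sum_distrib_right)
  finally show ?thesis unfolding Lf_def by (simp add: sum_subtractf[symmetric] algebra_simps)
qed

lemma lap_mult_vec:
  assumes irr: "\<And>i. \<not> E i i"
  shows "laplacian E N *\<^sub>v vec N f = vec N (Lf E N f)"
proof (rule eq_vecI)
  fix i assume "i < dim_vec (vec N (Lf E N f))"
  hence i: "i < N" by simp
  have "(laplacian E N *\<^sub>v vec N f) $ i = (\<Sum>j<N. laplacian E N $$ (i,j) * f j)"
    using i lap_carrier[of E N] by (auto simp: scalar_prod_def row_def intro!: sum.cong)
  thus "(laplacian E N *\<^sub>v vec N f) $ i = vec N (Lf E N f) $ i" using lap_row[where E=E and i=i and N=N and f=f, OF irr[of i] i] i by simp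
qed (use lap_carrier in auto)

lemma eig_root:
  assumes irr: "\<And>i. \<not> E i i"
    and ev: "\<And>i. i < N \<Longrightarrow> Lf E N f i = r * f i" and nz: "i < N" "f i \<noteq> 0"
  shows "poly (char_poly (laplacian E N)) r = 0"
proof -
  have "eigenvector (laplacian E N) (vec N f) r"
    unfolding eigenvector_def
  proof (intro conjI)
    show "vec N f \<in> carrier_vec (dim_row (laplacian E N))" using lap_carrier[of E N] by auto
    show "vec N f \<noteq> 0\<^sub>v (dim_row (laplacian E N))"
      using lap_carrier[of E N] nz by (auto simp: vec_eq_iff)
    show "laplacian E N *\<^sub>v vec N f = r \<cdot>\<^sub>v vec N f"
      unfolding lap_mult_vec[OF irr] using ev by (auto simp: vec_eq_iff)
  qed
  hence "eigenvalue (laplacian E N) r" unfolding eigenvalue_def by blast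
  thus ?thesis using eigenvalue_root_char_poly[OF lap_carrier] by blast
qed

lemma root_nonneg:
  assumes irr: "\<And>i. \<not> E i i" and sym: "\<And>i j. E i j \<Longrightarrow> E j i"
    and r: "poly (char_poly (laplacian E N)) r = 0"
  shows "r \<ge> 0"
proof -
  have "eigenvalue (laplacian E N) r" using eigenvalue_root_char_poly[OF lap_carrier] r by blast
  then obtain v where v: "eigenvector (laplacian E N) v r" unfolding eigenvalue_def by blast
  hence vc: "v \<in> carrier_vec N" and vnz: "v \<noteq> 0\<^sub>v N" and Av: "laplacian E N *\<^sub>v v = r \<cdot>\<^sub>v v"
    using lap_carrier[of E N] unfolding eigenvector_def by auto
  define f where "f i = v $ i" for i
  have vf: "v = vec N f" using vc unfolding f_def by (auto simp: vec_eq_iff)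
  have ev: "Lf E N f i = r * f i" if "i < N" for i
    using Av that unfolding vf lap_mult_vec[OF irr] by (auto simp: vec_eq_iff)
  obtain i where i: "i < N" "f i \<noteq> 0" using vnz vf by (auto simp: vec_eq_iff)
  have Q: "Qf E N f = r * (\<Sum>i<N. (f i)^2)"
    unfolding Qf_def by (simp add: ev sum_distrib_left power2_eq_square algebra_simps)
  have pos: "(\<Sum>i<N. (f i)^2) > 0"
    using i by (intro sum_pos2[of _ i]) auto
  have "Qf E N f \<ge> 0" by (rule Qf_nonneg[OF sym])
  with Q pos show ?thesis by (simp add: zero_le_mult_iff)
qed




lemma mult_entry:
  assumes "A \<in> carrier_mat n k" "B \<in> carrier_mat k m" "i < n" "j < m"
  shows "(A * B) $$ (i,j) = (\<Sum>l<k. A $$ (i,l) * B $$ (l,j))"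
  using assms by (simp add: scalar_prod_def atLeast0LessThan)

lemma lap_entry_sym:
  assumes sym: "\<And>i j. E i j \<Longrightarrow> E j i" and "i < N" "j < N"
  shows "laplacian E N $$ (i,j) = laplacian E N $$ (j,i)"
  using assms unfolding laplacian_def by auto

lemma lap_rowsum0:
  assumes irr: "\<And>i. \<not> E i i" and i: "i < N"
  shows "(\<Sum>j<N. laplacian E N $$ (i,j)) = 0"
  using lap_row[where f="\<lambda>_. 1" and E=E and i=i and N=N, OF irr[of i] i] unfolding Lf_def by simp

lemma lap_colsum0:
  assumes irr: "\<And>i. \<not> E i i" and sym: "\<And>i j. E i j \<Longrightarrow> E j i" and j: "j < N"
  shows "(\<Sum>i<N. laplacian E N $$ (i,j)) = 0"
  using lap_rowsum0[where E=E and N=N, OF irr j] lap_entry_sym[where E=E and N=N, OF sym _ j] by (metis (no_types, lifting) lessThan_iff sum.cong)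



definition Smat :: "nat \<Rightarrow> real mat" where
  "Smat N = mat N N (\<lambda>(i,j). (if i = j then 1 else 0) + (if j = 0 \<and> i \<noteq> 0 then 1 else 0))"
definition Tmat :: "nat \<Rightarrow> real mat" where
  "Tmat N = mat N N (\<lambda>(i,j). (if i = j then 1 else 0) - (if j = 0 \<and> i \<noteq> 0 then 1 else 0))"

lemma Smat_carrier: "Smat N \<in> carrier_mat N N" unfolding Smat_def by simp
lemma Tmat_carrier: "Tmat N \<in> carrier_mat N N" unfolding Tmat_def by simp

lemma sum_split_delta:
  fixes g :: "nat \<Rightarrow> real"
  assumes "i < N"
  shows "(\<Sum>j<N. ((if i = j then 1 else 0) + (if j = 0 \<and> i \<noteq> 0 then 1 else 0)) * g j)
     = g i + (if i \<noteq> 0 then g 0 else 0)"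
proof -
  have "(\<Sum>j<N. ((if i = j then 1 else 0) + (if j = 0 \<and> i \<noteq> 0 then 1 else 0)) * g j)
      = (\<Sum>j<N. (if i = j then g j else 0)) + (\<Sum>j<N. (if j = 0 then (if i \<noteq> 0 then g j else 0) else 0))"
    unfolding sum.distrib[symmetric] by (intro sum.cong) auto
  also have "\<dots> = g i + (if i \<noteq> 0 then g 0 else 0)"
    using assms by (simp add: sum.delta sum.delta')
  finally show ?thesis .
qed

lemma sum_split_delta2:
  fixes g :: "nat \<Rightarrow> real"
  assumes "i < N"
  shows "(\<Sum>j<N. ((if i = j then 1 else 0) - (if j = 0 \<and> i \<noteq> 0 then 1 else 0)) * g j)
     = g i - (if i \<noteq> 0 then g 0 else 0)"
proof -
  have "(\<Sum>j<N. ((if i = j then 1 else 0) - (if j = 0 \<and> i \<noteq> 0 then 1 else 0)) * g j)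
      = (\<Sum>j<N. (if i = j then g j else 0)) - (\<Sum>j<N. (if j = 0 then (if i \<noteq> 0 then g j else 0) else 0))"
    unfolding sum_subtractf[symmetric] by (intro sum.cong) auto
  also have "\<dots> = g i - (if i \<noteq> 0 then g 0 else 0)"
    using assms by (simp add: sum.delta sum.delta')
  finally show ?thesis .
qed

lemma ST: "Smat N * Tmat N = 1\<^sub>m N"
proof (rule eq_matI)
  fix i j assume i: "i < dim_row (1\<^sub>m N)" and j: "j < dim_col (1\<^sub>m N)"
  hence i: "i < N" and j: "j < N" by auto
  have "(Smat N * Tmat N) $$ (i,j) = (\<Sum>l<N. Smat N $$ (i,l) * Tmat N $$ (l,j))"
    by (rule mult_entry[OF Smat_carrier Tmat_carrier i j])
  also have "\<dots> = (\<Sum>l<N. ((if i = l then 1 else 0) + (if l = 0 \<and> i \<noteq> 0 then 1 else 0)) * Tmat N $$ (l,j))"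
    using i unfolding Smat_def by (intro sum.cong) auto
  also have "\<dots> = Tmat N $$ (i,j) + (if i \<noteq> 0 then Tmat N $$ (0,j) else 0)"
    by (rule sum_split_delta[OF i])
  also have "\<dots> = 1\<^sub>m N $$ (i,j)" using i j unfolding Tmat_def by auto
  finally show "(Smat N * Tmat N) $$ (i,j) = 1\<^sub>m N $$ (i,j)" .
qed (auto simp: Smat_def Tmat_def)

lemma TS: "Tmat N * Smat N = 1\<^sub>m N"
proof (rule eq_matI)
  fix i j assume i: "i < dim_row (1\<^sub>m N)" and j: "j < dim_col (1\<^sub>m N)"
  hence i: "i < N" and j: "j < N" by auto
  have "(Tmat N * Smat N) $$ (i,j) = (\<Sum>l<N. Tmat N $$ (i,l) * Smat N $$ (l,j))"
    by (rule mult_entry[OF Tmat_carrier Smat_carrier i j])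
  also have "\<dots> = (\<Sum>l<N. ((if i = l then 1 else 0) - (if l = 0 \<and> i \<noteq> 0 then 1 else 0)) * Smat N $$ (l,j))"
    using i unfolding Tmat_def by (intro sum.cong) auto
  also have "\<dots> = Smat N $$ (i,j) - (if i \<noteq> 0 then Smat N $$ (0,j) else 0)"
    by (rule sum_split_delta2[OF i])
  also have "\<dots> = 1\<^sub>m N $$ (i,j)" using i j unfolding Smat_def by auto
  finally show "(Tmat N * Smat N) $$ (i,j) = 1\<^sub>m N $$ (i,j)" .
qed (auto simp: Smat_def Tmat_def)



context
  fixes E :: "nat \<Rightarrow> nat \<Rightarrow> bool" and N :: nat
  assumes irr: "\<And>i. \<not> E i i" and sym: "\<And>i j. E i j \<Longrightarrow> E j i"
begin

abbreviation "LL \<equiv> laplacian E N"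

lemma LS_entry:
  assumes a: "a < N" and j: "j < N"
  shows "(LL * Smat N) $$ (a,j) = (if j = 0 then 0 else LL $$ (a,j))"
proof -
  have "(LL * Smat N) $$ (a,j) = (\<Sum>b<N. LL $$ (a,b) * Smat N $$ (b,j))"
    by (rule mult_entry[OF lap_carrier Smat_carrier a j])
  also have "\<dots> = (if j = 0 then 0 else LL $$ (a,j))"
  proof (cases "j = 0")
    case True
    hence "(\<Sum>b<N. LL $$ (a,b) * Smat N $$ (b,j)) = (\<Sum>b<N. LL $$ (a,b))"
      using j unfolding Smat_def by (intro sum.cong) auto
    thus ?thesis using lap_rowsum0[where E=E and N=N, OF irr a] True by simp
  next
    case False
    hence "(\<Sum>b<N. LL $$ (a,b) * Smat N $$ (b,j)) = (\<Sum>b<N. if b = j then LL $$ (a,b) else 0)"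
      using j unfolding Smat_def by (intro sum.cong) auto
    thus ?thesis using False j by (simp add: sum.delta)
  qed
  finally show ?thesis .
qed

lemma B0_entry:
  assumes i: "i < N" and j: "j < N"
  shows "(Tmat N * (LL * Smat N)) $$ (i,j) =
     (if j = 0 then 0 else LL $$ (i,j) - (if i \<noteq> 0 then LL $$ (0,j) else 0))"
proof -
  have LSc: "LL * Smat N \<in> carrier_mat N N" by (rule mult_carrier_mat[OF lap_carrier Smat_carrier])
  have "(Tmat N * (LL * Smat N)) $$ (i,j) = (\<Sum>l<N. Tmat N $$ (i,l) * (LL * Smat N) $$ (l,j))"
    by (rule mult_entry[OF Tmat_carrier LSc i j])
  also have "\<dots> = (\<Sum>l<N. ((if i = l then 1 else 0) - (if l = 0 \<and> i \<noteq> 0 then 1 else 0)) * (LL * Smat N) $$ (l,j))"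
    using i unfolding Tmat_def by (intro sum.cong) auto
  also have "\<dots> = (LL * Smat N) $$ (i,j) - (if i \<noteq> 0 then (LL * Smat N) $$ (0,j) else 0)"
    by (rule sum_split_delta2[OF i])
  also have "\<dots> = (if j = 0 then 0 else LL $$ (i,j) - (if i \<noteq> 0 then LL $$ (0,j) else 0))"
    using LS_entry[OF i j] LS_entry[OF _ j] i by auto
  finally show ?thesis .
qed

lemma sim_L: "similar_mat LL (Tmat N * (LL * Smat N))"
proof -
  have L: "LL \<in> carrier_mat N N" by (rule lap_carrier)
  have S: "Smat N \<in> carrier_mat N N" and T: "Tmat N \<in> carrier_mat N N"
    by (rule Smat_carrier, rule Tmat_carrier)
  have "Smat N * (Tmat N * (LL * Smat N)) * Tmat N = LL"
  proof -
    have "Smat N * (Tmat N * (LL * Smat N)) = (Smat N * Tmat N) * (LL * Smat N)"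
      using assoc_mult_mat[OF S T mult_carrier_mat[OF L S]] by simp
    also have "\<dots> = LL * Smat N" using ST L S by simp
    finally have "Smat N * (Tmat N * (LL * Smat N)) * Tmat N = LL * Smat N * Tmat N" by simp
    also have "\<dots> = LL * (Smat N * Tmat N)" by (rule assoc_mult_mat[OF L S T])
    also have "\<dots> = LL" using ST L by simp
    finally show ?thesis .
  qed
  hence "similar_mat_wit LL (Tmat N * (LL * Smat N)) (Smat N) (Tmat N)"
    unfolding similar_mat_wit_def Let_def using L S T ST TS by auto
  thus ?thesis unfolding similar_mat_def by blast
qed

end


context
  fixes E :: "nat \<Rightarrow> nat \<Rightarrow> bool" and N m :: nat
  assumes g: "undirected_connected_graph E N" and Nm: "N = Suc m"
begin

lemma irr': "\<not> E i i" using g unfolding undirected_connected_graph_def by auto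
lemma sym': "E i j \<Longrightarrow> E j i" using g unfolding undirected_connected_graph_def by auto

definition "Bblk = mat m m (\<lambda>(i,j). laplacian E N $$ (i+1,j+1) - laplacian E N $$ (0,j+1))"

lemma B0_block:
  "Tmat N * (laplacian E N * Smat N) =
     four_block_mat (mat 1 1 (\<lambda>_. 0)) (mat 1 m (\<lambda>(_,j). laplacian E N $$ (0,j+1))) (0\<^sub>m m 1) Bblk"
    (is "?L = ?R")
proof (rule eq_matI)
  have dimL: "dim_row ?L = N" "dim_col ?L = N"
    using Tmat_carrier[of N] Smat_carrier[of N] by auto
  have dimR: "dim_row ?R = N" "dim_col ?R = N" unfolding Bblk_def using Nm by auto
  show "dim_row ?L = dim_row ?R" "dim_col ?L = dim_col ?R" using dimL dimR by auto
  fix i j assume i: "i < dim_row ?R" and j: "j < dim_col ?R"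
  hence i': "i < N" and j': "j < N" using dimR by auto
  have e: "?L $$ (i,j) = (if j = 0 then 0 else laplacian E N $$ (i,j) - (if i \<noteq> 0 then laplacian E N $$ (0,j) else 0))"
    by (rule B0_entry[OF irr' sym' i' j'])
  show "?L $$ (i,j) = ?R $$ (i,j)"
    unfolding e Bblk_def using i j i' j' Nm by auto
qed

lemma charpoly_factor:
  "char_poly (laplacian E N) = [:0,1:] * char_poly Bblk"
proof -
  have A1: "mat 1 1 (\<lambda>_. 0) \<in> carrier_mat 1 1" by simp
  have A2: "mat 1 m (\<lambda>(_,j). laplacian E N $$ (0,j+1)) \<in> carrier_mat 1 m" by simp
  have A3: "Bblk \<in> carrier_mat m m" unfolding Bblk_def by simp
  have cp1: "char_poly (mat 1 1 (\<lambda>_. 0) :: real mat) = [:0,1:]"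
  proof -
    have "upper_triangular (mat 1 1 (\<lambda>_. 0) :: real mat)" by (auto simp: upper_triangular_def)
    from char_poly_upper_triangular[OF A1 this]
    show ?thesis by (simp add: diag_mat_def)
  qed
  have "char_poly (laplacian E N) = char_poly (Tmat N * (laplacian E N * Smat N))"
    by (rule char_poly_similar[OF sim_L[OF irr' sym']])
  also have "\<dots> = [:0,1:] * char_poly Bblk"
    unfolding B0_block char_poly_four_block_zeros_col[OF A1 A2 A3] cp1 ..
  finally show ?thesis .
qed

lemma Bblk_nonsing: "poly (char_poly Bblk) 0 \<noteq> 0"
proof
  assume "poly (char_poly Bblk) 0 = 0"
  have A3: "Bblk \<in> carrier_mat m m" unfolding Bblk_def by simp
  have "poly (char_poly Bblk) 0 = det (- (char_matrix Bblk 0))" by (rule char_poly_matrix[OF A3])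
  also have "char_matrix Bblk 0 = Bblk" unfolding char_matrix_def using A3 by (intro eq_matI) auto
  finally have "det (- Bblk) = 0" using \<open>poly (char_poly Bblk) 0 = 0\<close> by simp
  then obtain w where w: "w \<in> carrier_vec m" "w \<noteq> 0\<^sub>v m" "(- Bblk) *\<^sub>v w = 0\<^sub>v m"
    using det_0_iff_vec_prod_zero[of "- Bblk" m] A3 by auto
  have Bw: "(\<Sum>j<m. Bblk $$ (i,j) * w $ j) = 0" if i: "i < m" for i
  proof -
    have "((- Bblk) *\<^sub>v w) $ i = 0" using w(3) i by simp
    moreover have "((- Bblk) *\<^sub>v w) $ i = - (\<Sum>j<m. Bblk $$ (i,j) * w $ j)"
      using i w(1) A3 by (auto simp: scalar_prod_def atLeast0LessThan sum_negf[symmetric])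
    ultimately show ?thesis by simp
  qed
  define f where "f k = (if k = 0 then 0 else w $ (k - 1))" for k
  have row: "Lf E N f k = (\<Sum>j<m. laplacian E N $$ (k, Suc j) * w $ j)" if k: "k < N" for k
  proof -
    have "Lf E N f k = (\<Sum>j<N. laplacian E N $$ (k,j) * f j)"
      by (rule lap_row[where E=E and N=N and i=k, OF irr' k, symmetric])
    also have "\<dots> = (\<Sum>j<m. laplacian E N $$ (k, Suc j) * w $ j)"
      unfolding Nm sum.lessThan_Suc_shift by (simp add: f_def)
    finally show ?thesis .
  qed
  have diff: "Lf E N f (Suc i) = Lf E N f 0" if i: "i < m" for i
  proof -
    have r1: "Lf E N f (Suc i) = (\<Sum>j<m. laplacian E N $$ (Suc i, Suc j) * w $ j)"
      using row[of "Suc i"] i Nm by simp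
    have r0: "Lf E N f 0 = (\<Sum>j<m. laplacian E N $$ (0, Suc j) * w $ j)"
      using row[of 0] Nm by simp
    have bs: "(\<Sum>j<m. Bblk $$ (i,j) * w $ j) =
       (\<Sum>j<m. laplacian E N $$ (Suc i, Suc j) * w $ j) - (\<Sum>j<m. laplacian E N $$ (0, Suc j) * w $ j)"
      unfolding sum_subtractf[symmetric]
    proof (rule sum.cong)
      fix j assume "j \<in> {..<m}"
      hence "j < m" by simp
      thus "Bblk $$ (i,j) * w $ j = laplacian E N $$ (Suc i, Suc j) * w $ j - laplacian E N $$ (0, Suc j) * w $ j"
        unfolding Bblk_def using i by (simp add: left_diff_distrib)
    qed simp
    show ?thesis using Bw[OF i] unfolding bs r1[symmetric] r0[symmetric] by simp
  qed
  have const: "Lf E N f k = Lf E N f 0" if "k < N" for k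
    using that diff Nm by (cases k) auto
  have "(\<Sum>k<N. Lf E N f k) = 0" by (rule Lf_sum0[OF sym'])
  moreover have "(\<Sum>k<N. Lf E N f k) = (\<Sum>k<N. Lf E N f 0)"
    by (intro sum.cong refl const) simp
  ultimately have "real N * Lf E N f 0 = 0" by simp
  hence L0: "Lf E N f k = 0" if "k < N" for k using const[OF that] Nm by simp
  have "Qf E N f = 0" unfolding Qf_def by (simp add: L0)
  hence fc: "f k = f 0" if "k < N" for k using Qf_zero_const[where E=E and N=N and v=f and i=k and j=0, OF g _ that] Nm by auto
  have "w = 0\<^sub>v m"
  proof (rule eq_vecI)
    fix j assume "j < dim_vec (0\<^sub>v m)"
    hence j: "j < m" by simp
    have "w $ j = f (Suc j)" by (simp add: f_def)
    also have "\<dots> = 0" using fc[of "Suc j"] j Nm by (simp add: f_def)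
    finally show "w $ j = 0\<^sub>v m $ j" using j by simp
  qed (use w in auto)
  with w(2) show False by simp
qed

lemma order_zero_one: "order 0 (char_poly (laplacian E N)) = 1"
proof -
  have nz: "char_poly Bblk \<noteq> 0" using Bblk_nonsing by auto
  have "order 0 ([:0,1:] * char_poly Bblk) = order 0 ([:0,1:] :: real poly) + order 0 (char_poly Bblk)"
    using order_mult[of "[:0,1:]" "char_poly Bblk" 0] nz by simp
  also have "order 0 (char_poly Bblk) = 0" by (rule order_0I[OF Bblk_nonsing])
  also have "order 0 ([:0,1:] :: real poly) = 1" using order_power_n_n[of "0::real" 1] by simp
  finally show ?thesis unfolding charpoly_factor by simp
qed

end



lemma Lf_lin: "Lf E N (\<lambda>i. v i + s * w i) i = Lf E N v i + s * Lf E N w i"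
  unfolding Lf_def sum_distrib_left sum.distrib[symmetric] by (intro sum.cong) (auto simp: algebra_simps)

lemma Lf_scale: "Lf E N (\<lambda>i. c * v i) i = c * Lf E N v i"
  unfolding Lf_def by (simp add: sum_distrib_left algebra_simps)

lemma Qf_scale: "Qf E N (\<lambda>i. c * v i) = c^2 * Qf E N v"
  unfolding Qf_def Lf_scale by (simp add: sum_distrib_left power2_eq_square algebra_simps)

lemma Lf_cong: "(\<And>i. i < N \<Longrightarrow> u i = v i) \<Longrightarrow> j < N \<Longrightarrow> Lf E N u j = Lf E N v j"
  unfolding Lf_def by (intro sum.cong) auto

lemma Qf_cong: "(\<And>i. i < N \<Longrightarrow> u i = v i) \<Longrightarrow> Qf E N u = Qf E N v"
  unfolding Qf_def by (intro sum.cong) (auto intro: Lf_cong)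

lemma Qf_expand:
  assumes sym: "\<And>i j. E i j \<Longrightarrow> E j i"
  shows "Qf E N (\<lambda>i. v i + s * w i) = Qf E N v + 2 * s * (\<Sum>i<N. w i * Lf E N v i) + s^2 * Qf E N w"
proof -
  have "Qf E N (\<lambda>i. v i + s * w i) = (\<Sum>i<N. (v i + s * w i) * (Lf E N v i + s * Lf E N w i))"
    unfolding Qf_def Lf_lin ..
  also have "\<dots> = Qf E N v + s * (\<Sum>i<N. v i * Lf E N w i) + s * (\<Sum>i<N. w i * Lf E N v i) + s^2 * Qf E N w"
    unfolding Qf_def by (simp add: sum.distrib sum_distrib_left power2_eq_square algebra_simps)
  also have "(\<Sum>i<N. v i * Lf E N w i) = (\<Sum>i<N. w i * Lf E N v i)"
    by (rule Lf_sym[OF sym, symmetric])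
  finally show ?thesis by simp
qed

lemma quad_zero:
  fixes \<alpha> \<beta> :: real
  assumes "\<And>s. 2 * s * \<beta> + s^2 * \<alpha> \<ge> 0"
  shows "\<beta> = 0"
proof (rule ccontr)
  assume nz: "\<beta> \<noteq> 0"
  define c where "c = \<bar>\<alpha>\<bar> + 1"
  have c: "c > 0" "\<bar>\<alpha>\<bar> \<le> c" unfolding c_def by auto
  define s where "s = - \<beta> / c"
  have "2 * s * \<beta> = - 2 * \<beta>^2 / c" unfolding s_def by (simp add: power2_eq_square)
  moreover have "s^2 * \<alpha> \<le> \<beta>^2 / c"
  proof -
    have "s^2 * \<alpha> \<le> s^2 * \<bar>\<alpha>\<bar>" by (intro mult_left_mono) auto
    also have "\<dots> \<le> s^2 * c" using c by (intro mult_left_mono) auto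
    also have "\<dots> = \<beta>^2 / c" unfolding s_def using c by (simp add: power2_eq_square field_simps)
    finally show ?thesis .
  qed
  moreover have "\<beta>^2 / c > 0" using nz c by simp
  ultimately have "2 * s * \<beta> + s^2 * \<alpha> < 0" by (simp add: field_simps)
  with assms[of s] show False by simp
qed


definition Kset :: "nat \<Rightarrow> (nat \<Rightarrow> real) set" where
  "Kset N = (Pi\<^sub>E UNIV (\<lambda>i. if i < N then {-1..1} else {0})) \<inter> {v. (\<Sum>i<N. v i) = 0}
             \<inter> {v. (\<Sum>i<N. (v i)^2) = 1}"

lemma Kset_compact: "compact (Kset N)"
proof -
  have "compactin (product_topology (\<lambda>i. euclidean) UNIV)
          (Pi\<^sub>E UNIV (\<lambda>i. if i < N then {-1..(1::real)} else {0}))"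
    by (subst compactin_PiE) auto
  hence c1: "compact (Pi\<^sub>E UNIV (\<lambda>i. if i < N then {-1..(1::real)} else {0}))"
    unfolding euclidean_product_topology by simp
  have cs: "continuous_on UNIV (\<lambda>v::nat \<Rightarrow> real. (\<Sum>i<N. v i))"
    by (intro continuous_on_sum) simp
  have cq: "continuous_on UNIV (\<lambda>v::nat \<Rightarrow> real. (\<Sum>i<N. (v i)^2))"
    by (intro continuous_on_sum continuous_on_power) simp
  have cl1: "closed {v::nat \<Rightarrow> real. (\<Sum>i<N. v i) = 0}"
    by (rule closed_Collect_eq[OF cs continuous_on_const])
  have cl2: "closed {v::nat \<Rightarrow> real. (\<Sum>i<N. (v i)^2) = 1}"
    by (rule closed_Collect_eq[OF cq continuous_on_const])
  show ?thesis unfolding Kset_def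
    by (intro compact_Int_closed c1 cl1 cl2)
qed

lemma Kset_nonempty: "N \<ge> 2 \<Longrightarrow> Kset N \<noteq> {}"
proof -
  assume N: "N \<ge> 2"
  define a :: real where "a = 1 / sqrt 2"
  have a2: "a^2 = 1/2" unfolding a_def by (simp add: power_divide)
  have a1: "\<bar>a\<bar> \<le> 1" unfolding a_def by (simp add: abs_div_pos)
  define v where "v i = (if i = 0 then a else 0) + (if i = 1 then - a else 0)" for i :: nat
  have s1: "(\<Sum>i<N. v i) = 0" unfolding v_def sum.distrib using N by (simp add: sum.delta')
  have "(\<Sum>i<N. (v i)^2) = (\<Sum>i<N. (if i = 0 then a^2 else 0) + (if i = 1 then a^2 else 0))"
    unfolding v_def by (intro sum.cong) auto
  also have "\<dots> = 1" unfolding sum.distrib using N a2 by (simp add: sum.delta')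
  finally have s2: "(\<Sum>i<N. (v i)^2) = 1" .
  have "v \<in> Kset N" unfolding Kset_def using s1 s2 a1 N
    by (auto simp: v_def PiE_iff abs_le_iff)
  thus ?thesis by auto
qed

lemma coord_cont: "continuous_on S (\<lambda>v::nat \<Rightarrow> real. v i)"
  by (rule continuous_on_subset[OF continuous_on_product_coordinates]) auto

lemma Qf_cont: "continuous_on S (Qf E N)"
  unfolding Qf_def[abs_def] Lf_def
  by (intro continuous_on_sum continuous_on_mult continuous_on_diff continuous_on_const coord_cont)


lemma rayleigh:
  assumes g: "undirected_connected_graph E N" and N2: "N \<ge> 2"
  shows "\<exists>\<mu>>0. poly (char_poly (laplacian E N)) \<mu> = 0 \<and>
           (\<forall>u. (\<Sum>i<N. u i) = 0 \<longrightarrow> Qf E N u \<ge> \<mu> * (\<Sum>i<N. (u i)^2))"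
proof -
  have sym: "\<And>i j. E i j \<Longrightarrow> E j i" and irr: "\<And>i. \<not> E i i"
    using g unfolding undirected_connected_graph_def by auto
  obtain v0 where v0K: "v0 \<in> Kset N" and v0min: "\<And>y. y \<in> Kset N \<Longrightarrow> Qf E N v0 \<le> Qf E N y"
    using continuous_attains_inf[OF Kset_compact Kset_nonempty[OF N2] Qf_cont] by blast
  define \<mu> where "\<mu> = Qf E N v0"
  have v0s: "(\<Sum>i<N. v0 i) = 0" and v0q: "(\<Sum>i<N. (v0 i)^2) = 1"
    using v0K unfolding Kset_def by auto
  have bound: "Qf E N u \<ge> \<mu> * (\<Sum>i<N. (u i)^2)" if us: "(\<Sum>i<N. u i) = 0" for u
  proof (cases "(\<Sum>i<N. (u i)^2) = 0")
    case True
    hence "\<forall>i\<in>{..<N}. (u i)^2 = 0" by (subst sum_nonneg_eq_0_iff[symmetric]) auto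
    hence "Qf E N u = Qf E N (\<lambda>i. 0 * u i)" by (intro Qf_cong) auto
    also have "\<dots> = 0" unfolding Qf_scale by simp
    finally show ?thesis using True by simp
  next
    case False
    define S where "S = (\<Sum>i<N. (u i)^2)"
    have Spos: "S > 0" using False unfolding S_def by (simp add: order.not_eq_order_implies_strict sum_nonneg)
    define u' where "u' i = (if i < N then u i / sqrt S else 0)" for i
    have ui: "\<bar>u i\<bar> \<le> sqrt S" if "i < N" for i
    proof -
      have "(u i)^2 \<le> S" unfolding S_def using that
        by (intro member_le_sum) auto
      thus ?thesis using real_le_rsqrt by (metis real_sqrt_abs real_sqrt_le_mono)
    qed
    have "u' \<in> Kset N"
    proof -
      have "(\<Sum>i<N. u' i) = (\<Sum>i<N. u i) / sqrt S" unfolding u'_def by (simp add: sum_divide_distrib)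
      hence a: "(\<Sum>i<N. u' i) = 0" using us by simp
      have "(\<Sum>i<N. (u' i)^2) = (\<Sum>i<N. (u i)^2) / S"
        unfolding u'_def using Spos by (simp add: sum_divide_distrib power_divide)
      hence b: "(\<Sum>i<N. (u' i)^2) = 1" using Spos unfolding S_def by simp
      have c: "u' i \<in> (if i < N then {-1..1} else {0})" for i
        using ui[of i] Spos by (auto simp: u'_def abs_le_iff divide_le_eq le_divide_eq)
      show ?thesis unfolding Kset_def using a b c by auto
    qed
    hence "\<mu> \<le> Qf E N u'" unfolding \<mu>_def by (rule v0min)
    also have "Qf E N u' = Qf E N (\<lambda>i. (1 / sqrt S) * u i)" by (intro Qf_cong) (simp add: u'_def)
    also have "\<dots> = Qf E N u / S" unfolding Qf_scale using Spos by (simp add: power_divide)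
    finally show ?thesis using Spos unfolding S_def by (simp add: le_divide_eq mult.commute)
  qed
  define w where "w i = (if i < N then Lf E N v0 i - \<mu> * v0 i else 0)" for i
  have ws: "(\<Sum>i<N. w i) = 0"
    unfolding w_def using Lf_sum0[where E=E and N=N and v=v0, OF sym] v0s by (simp add: sum_subtractf sum_distrib_left[symmetric])
  have quad: "2 * s * (\<Sum>i<N. (w i)^2) + s^2 * (Qf E N w - \<mu> * (\<Sum>i<N. (w i)^2)) \<ge> 0" for s
  proof -
    have "(\<Sum>i<N. v0 i + s * w i) = 0" using v0s ws by (simp add: sum.distrib sum_distrib_left[symmetric])
    hence "Qf E N (\<lambda>i. v0 i + s * w i) \<ge> \<mu> * (\<Sum>i<N. (v0 i + s * w i)^2)" by (rule bound)
    moreover have "(\<Sum>i<N. (v0 i + s * w i)^2) = 1 + 2 * s * (\<Sum>i<N. v0 i * w i) + s^2 * (\<Sum>i<N. (w i)^2)"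
      using v0q by (simp add: power2_sum sum.distrib sum_distrib_left power_mult_distrib algebra_simps)
    moreover have "(\<Sum>i<N. w i * Lf E N v0 i) - \<mu> * (\<Sum>i<N. v0 i * w i) = (\<Sum>i<N. (w i)^2)"
      unfolding sum_distrib_left sum_subtractf[symmetric]
      by (intro sum.cong) (auto simp: w_def power2_eq_square algebra_simps)
    moreover have "Qf E N (\<lambda>i. v0 i + s * w i) = Qf E N v0 + 2 * s * (\<Sum>i<N. w i * Lf E N v0 i) + s^2 * Qf E N w"
      by (rule Qf_expand[where E=E, OF sym])
    ultimately show ?thesis unfolding \<mu>_def[symmetric]
      by (simp add: algebra_simps)
  qed
  have "(\<Sum>i<N. (w i)^2) = 0"
    by (rule quad_zero[of "\<Sum>i<N. (w i)^2" "Qf E N w - \<mu> * (\<Sum>i<N. (w i)^2)"]) (use quad in simp)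
  hence "\<forall>i\<in>{..<N}. (w i)^2 = 0" by (subst sum_nonneg_eq_0_iff[symmetric]) auto
  hence ev: "Lf E N v0 i = \<mu> * v0 i" if "i < N" for i using that by (auto simp: w_def)
  obtain i0 where i0: "i0 < N" "v0 i0 \<noteq> 0"
  proof -
    have "\<not> (\<forall>i<N. v0 i = 0)"
    proof
      assume "\<forall>i<N. v0 i = 0"
      hence "(\<Sum>i<N. (v0 i)^2) = 0" by simp
      thus False using v0q by simp
    qed
    thus ?thesis using that by auto
  qed
  have root: "poly (char_poly (laplacian E N)) \<mu> = 0" by (rule eig_root[OF irr ev i0])
  have "\<mu> \<ge> 0" unfolding \<mu>_def by (rule Qf_nonneg[OF sym])
  moreover have "\<mu> \<noteq> 0"
  proof
    assume "\<mu> = 0"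
    hence c: "v0 i = v0 0" if "i < N" for i
      using Qf_zero_const[where E=E and N=N and v=v0 and i=i and j=0, OF g] that N2 unfolding \<mu>_def by auto
    have "(\<Sum>i<N. v0 i) = (\<Sum>i<N. v0 0)" by (intro sum.cong refl c) simp
    hence "v0 0 = 0" using v0s N2 by simp
    hence "v0 i0 = 0" using c[OF i0(1)] by simp
    thus False using i0 by simp
  qed
  ultimately have "\<mu> > 0" by simp
  thus ?thesis using root bound by blast
qed


lemma lambda2_props:
  assumes g: "undirected_connected_graph E N" and N2: "N \<ge> 2"
  shows "lambda2 E N > 0 \<and> (\<forall>u. (\<Sum>i<N. u i) = 0 \<longrightarrow> Qf E N u \<ge> lambda2 E N * (\<Sum>i<N. (u i)^2))"
proof -
  have sym: "\<And>i j. E i j \<Longrightarrow> E j i" and irr: "\<And>i. \<not> E i i"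
    using g unfolding undirected_connected_graph_def by auto
  obtain \<mu> where mu: "\<mu> > 0" "poly (char_poly (laplacian E N)) \<mu> = 0"
    and bnd: "\<And>u. (\<Sum>i<N. u i) = 0 \<Longrightarrow> Qf E N u \<ge> \<mu> * (\<Sum>i<N. (u i)^2)"
    using rayleigh[OF g N2] by blast
  define p where "p = char_poly (laplacian E N)"
  have "coeff p N = 1" unfolding p_def using degree_monic_char_poly[OF lap_carrier] by blast
  hence pnz: "p \<noteq> 0" by auto
  define xs where "xs = sorted_list_of_multiset (proots p)"
  have l2: "lambda2 E N = xs ! 1" unfolding lambda2_def sorted_eigenvalues_def xs_def p_def ..
  have sxs: "sorted xs" unfolding xs_def by simp
  have mxs: "mset xs = proots p" unfolding xs_def by simp
  have setxs: "set xs = {x. poly p x = 0}" using pnz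
    by (metis mxs set_count_proots set_mset_mset)
  have cnt0: "count (mset xs) 0 = 1" unfolding mxs using pnz order_zero_one[OF g, of "N - 1"] N2
    by (simp add: p_def)
  have nn: "x \<ge> 0" if "x \<in> set xs" for x
    using that setxs root_nonneg[where E=E and N=N, OF irr sym] unfolding p_def by auto
  have root0: "poly p 0 = 0" unfolding p_def
    by (rule eig_root[where f="\<lambda>_. 1" and i=0, OF irr]) (use N2 in \<open>auto simp: Lf_def\<close>)
  have "0 \<in> set xs" using setxs root0 by auto
  then obtain j where j: "j < length xs" "xs ! j = 0" by (auto simp: in_set_conv_nth)
  have "\<mu> \<in> set xs" using setxs mu(2) unfolding p_def by auto
  then obtain k where k: "k < length xs" "xs ! k = \<mu>" by (auto simp: in_set_conv_nth)
  have k0: "k \<noteq> 0"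
  proof
    assume "k = 0"
    hence "xs ! k \<le> xs ! j" using sorted_nth_mono[OF sxs, of k j] j k by simp
    thus False using j k mu by simp
  qed
  have len: "length xs \<ge> 2" using k k0 by simp
  have le: "xs ! 1 \<le> \<mu>" using sorted_nth_mono[OF sxs, of 1 k] k k0 by simp
  have ge0a: "xs ! 0 \<ge> 0" by (rule nn, rule nth_mem) (use len in auto)
  have ge0b: "xs ! 1 \<ge> 0" by (rule nn, rule nth_mem) (use len in auto)
  note ge0 = ge0a ge0b
  have pos: "xs ! 1 > 0"
  proof (rule ccontr)
    assume "\<not> xs ! 1 > 0"
    hence x1: "xs ! 1 = 0" using ge0 by simp
    have "xs ! 0 \<le> xs ! 1" using sorted_nth_mono[OF sxs, of 0 1] len by simp
    hence x0: "xs ! 0 = 0" using ge0 x1 by simp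
    obtain a b ys where xs: "xs = a # b # ys" using len by (cases xs; cases "tl xs") auto
    have "a = 0" "b = 0" using x0 x1 xs by auto
    hence "count (mset xs) 0 \<ge> 2" unfolding xs by simp
    thus False using cnt0 by simp
  qed
  show ?thesis
  proof (intro conjI allI impI)
    show "lambda2 E N > 0" using pos l2 by simp
    fix u :: "nat \<Rightarrow> real" assume "(\<Sum>i<N. u i) = 0"
    hence "Qf E N u \<ge> \<mu> * (\<Sum>i<N. (u i)^2)" by (rule bnd)
    moreover have "lambda2 E N * (\<Sum>i<N. (u i)^2) \<le> \<mu> * (\<Sum>i<N. (u i)^2)"
      using le l2 by (intro mult_right_mono sum_nonneg) auto
    ultimately show "Qf E N u \<ge> lambda2 E N * (\<Sum>i<N. (u i)^2)" by simp
  qed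
qed




lemma spec_norm_bound:
  fixes A :: "'r \<Rightarrow> 'c \<Rightarrow> real"
  shows "(\<Sum>r\<in>Rw. (\<Sum>c\<in>Cl. A r c * e c)^2) \<le> (spec_norm Rw Cl A)^2 * (\<Sum>c\<in>Cl. (e c)^2)"
proof -
  define S where "S = {sqrt (\<Sum>r\<in>Rw. (\<Sum>c\<in>Cl. A r c * v c)\<^sup>2) | v. (\<Sum>c\<in>Cl. (v c)\<^sup>2) \<le> 1}"
  have sn: "spec_norm Rw Cl A = Sup S" unfolding spec_norm_def S_def ..
  define B where "B = sqrt (\<Sum>r\<in>Rw. \<Sum>c\<in>Cl. (A r c)^2)"
  have bdd: "bdd_above S"
  proof (rule bdd_aboveI)
    fix x assume "x \<in> S"
    then obtain v where x: "x = sqrt (\<Sum>r\<in>Rw. (\<Sum>c\<in>Cl. A r c * v c)\<^sup>2)" and v: "(\<Sum>c\<in>Cl. (v c)\<^sup>2) \<le> 1"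
      unfolding S_def by blast
    have "(\<Sum>r\<in>Rw. (\<Sum>c\<in>Cl. A r c * v c)\<^sup>2) \<le> (\<Sum>r\<in>Rw. \<Sum>c\<in>Cl. (A r c)^2)"
    proof (rule sum_mono)
      fix r
      have "(\<Sum>c\<in>Cl. A r c * v c)\<^sup>2 \<le> (\<Sum>c\<in>Cl. (A r c)^2) * (\<Sum>c\<in>Cl. (v c)\<^sup>2)"
        by (rule Cauchy_Schwarz_ineq_sum)
      also have "\<dots> \<le> (\<Sum>c\<in>Cl. (A r c)^2) * 1"
        by (rule mult_left_mono[OF v]) (simp add: sum_nonneg)
      finally show "(\<Sum>c\<in>Cl. A r c * v c)\<^sup>2 \<le> (\<Sum>c\<in>Cl. (A r c)^2)" by simp
    qed
    thus "x \<le> B" unfolding x B_def by (rule real_sqrt_le_mono)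
  qed
  have mem: "sqrt (\<Sum>r\<in>Rw. (\<Sum>c\<in>Cl. A r c * v c)\<^sup>2) \<le> spec_norm Rw Cl A"
    if "(\<Sum>c\<in>Cl. (v c)\<^sup>2) \<le> 1" for v
    unfolding sn by (rule cSup_upper[OF _ bdd]) (use that in \<open>auto simp: S_def\<close>)
  define s where "s = (\<Sum>c\<in>Cl. (e c)^2)"
  show ?thesis
  proof (cases "s = 0")
    case True
    have "(\<Sum>c\<in>Cl. A r c * e c) = 0" for r
    proof (cases "finite Cl")
      case True
      hence "\<forall>c\<in>Cl. (e c)^2 = 0" using \<open>s = 0\<close> unfolding s_def
        by (subst sum_nonneg_eq_0_iff[symmetric]) auto
      thus ?thesis by simp
    qed simp
    thus ?thesis using True unfolding s_def by simp
  next
    case False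
    have spos: "s > 0" using False unfolding s_def by (simp add: order.not_eq_order_implies_strict sum_nonneg)
    define v where "v c = e c / sqrt s" for c
    have "(\<Sum>c\<in>Cl. (v c)\<^sup>2) = (\<Sum>c\<in>Cl. (e c)^2) / s" unfolding v_def using spos
      by (simp add: power_divide sum_divide_distrib)
    also have "\<dots> = s / s" unfolding s_def ..
    finally have "(\<Sum>c\<in>Cl. (v c)\<^sup>2) = s / s" .
    hence "(\<Sum>c\<in>Cl. (v c)\<^sup>2) \<le> 1" using spos by simp
    hence m: "sqrt (\<Sum>r\<in>Rw. (\<Sum>c\<in>Cl. A r c * v c)\<^sup>2) \<le> spec_norm Rw Cl A" by (rule mem)
    have "(\<Sum>r\<in>Rw. (\<Sum>c\<in>Cl. A r c * v c)\<^sup>2) = (\<Sum>r\<in>Rw. (\<Sum>c\<in>Cl. A r c * e c)\<^sup>2) / s"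
    proof -
      have "(\<Sum>c\<in>Cl. A r c * v c) = (\<Sum>c\<in>Cl. A r c * e c) / sqrt s" for r
        unfolding v_def by (simp add: sum_divide_distrib)
      hence "(\<Sum>c\<in>Cl. A r c * v c)^2 = (\<Sum>c\<in>Cl. A r c * e c)^2 / s" for r
        using spos by (simp add: power_divide)
      thus ?thesis by (simp add: sum_divide_distrib)
    qed
    hence "sqrt ((\<Sum>r\<in>Rw. (\<Sum>c\<in>Cl. A r c * e c)\<^sup>2) / s) \<le> spec_norm Rw Cl A" using m by simp
    hence "(\<Sum>r\<in>Rw. (\<Sum>c\<in>Cl. A r c * e c)\<^sup>2) / s \<le> (spec_norm Rw Cl A)^2"
      by (rule sqrt_le_D)
    thus ?thesis using spos unfolding s_def by (simp add: divide_le_eq)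
  qed
qed


lemma finite_nbrs: "finite (nbrs E N i)" unfolding nbrs_def by simp

lemma pairs_Sigma: "pairs E N = Sigma {..<N} (nbrs E N)"
  unfolding pairs_def by auto

lemma finite_pairs: "finite (pairs E N)"
  unfolding pairs_Sigma by (simp add: finite_nbrs)

lemma sum_pairs: "(\<Sum>p\<in>pairs E N. f p) = (\<Sum>i<N. \<Sum>j\<in>nbrs E N i. f (i,j))"
  unfolding pairs_Sigma by (subst sum.Sigma) (auto simp: finite_nbrs)

lemma JW_entry:
  assumes k: "k < N" and p: "p \<in> pairs E N"
  shows "(\<Sum>l<N. JN N k l * Wmat l p) = (if fst p = k then 1 else 0) - 1 / real N"
proof -
  have fp: "fst p < N" using p unfolding pairs_def by auto
  have "(\<Sum>l<N. JN N k l * Wmat l p) = (\<Sum>l<N. (if l = fst p then JN N k l else 0))"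
    unfolding Wmat_def by (intro sum.cong) auto
  also have "\<dots> = JN N k (fst p)" using fp by (simp add: sum.delta')
  finally show ?thesis unfolding JN_def by auto
qed

lemma JW_apply:
  assumes k: "k < N"
  shows "(\<Sum>p\<in>pairs E N. (\<Sum>l<N. JN N k l * Wmat l p) * e p) =
     (\<Sum>j\<in>nbrs E N k. e (k,j)) - (1 / real N) * (\<Sum>p\<in>pairs E N. e p)"
proof -
  have "(\<Sum>p\<in>pairs E N. (\<Sum>l<N. JN N k l * Wmat l p) * e p) =
        (\<Sum>p\<in>pairs E N. (if fst p = k then e p else 0)) - (\<Sum>p\<in>pairs E N. (1 / real N) * e p)"
    unfolding sum_subtractf[symmetric] by (intro sum.cong) (auto simp: JW_entry[OF k] left_diff_distrib)
  also have "(\<Sum>p\<in>pairs E N. (if fst p = k then e p else 0)) = (\<Sum>i<N. \<Sum>j\<in>nbrs E N i. (if i = k then e (i,j) else 0))"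
    unfolding sum_pairs by simp
  also have "\<dots> = (\<Sum>i<N. (if i = k then (\<Sum>j\<in>nbrs E N i. e (i,j)) else 0))"
    by (intro sum.cong) auto
  also have "\<dots> = (\<Sum>j\<in>nbrs E N k. e (k,j))" using k by (simp add: sum.delta')
  finally show ?thesis by (simp add: sum_distrib_left)
qed

lemma lambdaG_bound:
  "(\<Sum>k<N. ((\<Sum>j\<in>nbrs E N k. e (k,j)) - (1 / real N) * (\<Sum>p\<in>pairs E N. e p))^2)
     \<le> lambdaG E N * (\<Sum>p\<in>pairs E N. (e p)^2)"
proof -
  have "(\<Sum>k<N. ((\<Sum>j\<in>nbrs E N k. e (k,j)) - (1 / real N) * (\<Sum>p\<in>pairs E N. e p))^2)
      = (\<Sum>k\<in>{..<N}. (\<Sum>p\<in>pairs E N. (\<Sum>l<N. JN N k l * Wmat l p) * e p)^2)"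
    by (intro sum.cong) (auto simp: JW_apply)
  also have "\<dots> \<le> lambdaG E N * (\<Sum>p\<in>pairs E N. (e p)^2)"
    unfolding lambdaG_def by (rule spec_norm_bound)
  finally show ?thesis .
qed

lemma lambdaG_nonneg: "lambdaG E N \<ge> 0" unfolding lambdaG_def by simp


lemma amgm: fixes a b l :: real assumes l: "l > 0" shows "2 * a * b \<le> l * a^2 + b^2 / l"
proof -
  have "0 \<le> (l * a - b)^2" by simp
  hence h: "2 * l * a * b \<le> l^2 * a^2 + b^2" by (simp add: power2_eq_square algebra_simps)
  have e1: "l * a^2 + b^2 / l = (l^2 * a^2 + b^2) / l" using l by (simp add: field_simps power2_eq_square)
  have e2: "2 * a * b = (2 * l * a * b) / l" using l by simp
  show ?thesis unfolding e1 e2 using h l by (intro divide_right_mono) auto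
qed

lemma card_nbrs_le: "card (nbrs E N i) \<le> N"
proof -
  have "nbrs E N i \<subseteq> {..<N}" unfolding nbrs_def by auto
  thus ?thesis using card_mono[of "{..<N}"] by fastforce
qed

lemma abs_sum_nbrs_le:
  assumes B: "B \<ge> 0" and "\<And>j. j \<in> nbrs E N i \<Longrightarrow> \<bar>f j\<bar> \<le> B"
  shows "\<bar>\<Sum>j\<in>nbrs E N i. f j\<bar> \<le> real N * B"
proof -
  have "\<bar>\<Sum>j\<in>nbrs E N i. f j\<bar> \<le> (\<Sum>j\<in>nbrs E N i. \<bar>f j\<bar>)" by (rule sum_abs)
  also have "\<dots> \<le> (\<Sum>j\<in>nbrs E N i. B)" using assms by (intro sum_mono) auto
  also have "\<dots> = real (card (nbrs E N i)) * B" by simp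
  also have "\<dots> \<le> real N * B" using B card_nbrs_le[of E N i] by (auto intro: mult_right_mono)
  finally show ?thesis .
qed

lemma Lf_shift: "Lf E N (\<lambda>i. y i - c) i = Lf E N y i"
  unfolding Lf_def by simp

lemma Lf_nbrs: "Lf E N y i = (\<Sum>j\<in>nbrs E N i. y i - y j)"
proof -
  have e: "nbrs E N i = {j\<in>{..<N}. E i j}" unfolding nbrs_def by auto
  have "(\<Sum>j\<in>nbrs E N i. y i - y j) = (\<Sum>j<N. if E i j then y i - y j else 0)"
    unfolding e by (rule sum.inter_filter) simp
  thus ?thesis unfolding Lf_def by (auto intro!: sum.cong)
qed


lemma sq_le_of_abs: fixes x c :: real assumes "\<bar>x\<bar> \<le> c" shows "x^2 \<le> c^2"
proof -
  have "\<bar>x\<bar>^2 \<le> c^2" using assms by (intro power_mono) auto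
  thus ?thesis by simp
qed

lemma pathwise:
  fixes y y' :: "nat \<Rightarrow> real" and z :: "nat \<Rightarrow> nat \<Rightarrow> real"
  assumes g: "undirected_connected_graph E N" and N2: "N \<ge> 2" and h: "h \<ge> 0" and M: "M \<ge> 0"
    and yb: "\<And>i. i < N \<Longrightarrow> \<bar>y i\<bar> \<le> M" and zb: "\<And>i j. (i,j) \<in> pairs E N \<Longrightarrow> \<bar>z i j\<bar> \<le> M"
    and step: "\<And>i. i < N \<Longrightarrow> y' i = y i + h * (\<Sum>j\<in>nbrs E N i. z i j - y i)"
  shows "(\<Sum>i<N. (y' i - (1/real N) * (\<Sum>l<N. y' l))^2)
     \<le> (1 - h * lambda2 E N) * (\<Sum>i<N. (y i - (1/real N) * (\<Sum>l<N. y l))^2)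
        + h * lambdaG E N / lambda2 E N * (\<Sum>i<N. \<Sum>j\<in>nbrs E N i. (z i j - y j)^2)
        + h^2 * (16 * real N^3 * M^2)"
proof -
  have sym: "\<And>i j. E i j \<Longrightarrow> E j i" using g unfolding undirected_connected_graph_def by auto
  have Npos: "real N > 0" using N2 by simp
  define ybar where "ybar = (1/real N) * (\<Sum>l<N. y l)"
  define D where "D i = (\<Sum>j\<in>nbrs E N i. z i j - y i)" for i
  define Dbar where "Dbar = (1/real N) * (\<Sum>l<N. D l)"
  define v where "v i = y i - ybar" for i
  define e where "e p = z (fst p) (snd p) - y (snd p)" for p
  define Eb where "Eb i = (\<Sum>j\<in>nbrs E N i. e (i,j))" for i
  define gg where "gg i = Eb i - (1 / real N) * (\<Sum>p\<in>pairs E N. e p)" for i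
  define lam where "lam = lambda2 E N"
  have lam: "lam > 0" and Qb0: "\<And>u. (\<Sum>i<N. u i) = 0 \<Longrightarrow> Qf E N u \<ge> lam * (\<Sum>i<N. (u i)^2)"
    using lambda2_props[OF g N2] unfolding lam_def by auto
  have sv0: "(\<Sum>i<N. v i) = 0"
    unfolding v_def ybar_def using Npos by (simp add: sum_subtractf)
  have y'sum: "(\<Sum>l<N. y' l) = (\<Sum>l<N. y l) + h * (\<Sum>l<N. D l)"
    by (simp add: step D_def sum.distrib sum_distrib_left)
  have v'eq: "y' i - (1/real N) * (\<Sum>l<N. y' l) = v i + h * (D i - Dbar)" if "i < N" for i
    unfolding y'sum using that step[OF that] by (simp add: v_def ybar_def Dbar_def D_def algebra_simps)
  have LHS: "(\<Sum>i<N. (y' i - (1/real N) * (\<Sum>l<N. y' l))^2)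
      = (\<Sum>i<N. (v i)^2) + 2 * h * (\<Sum>i<N. v i * (D i - Dbar)) + h^2 * (\<Sum>i<N. (D i - Dbar)^2)"
  proof -
    have "(\<Sum>i<N. (y' i - (1/real N) * (\<Sum>l<N. y' l))^2) = (\<Sum>i<N. (v i + h * (D i - Dbar))^2)"
      by (intro sum.cong refl) (subst v'eq, auto)
    also have "\<dots> = (\<Sum>i<N. (v i)^2 + 2 * h * (v i * (D i - Dbar)) + h^2 * (D i - Dbar)^2)"
      by (intro sum.cong refl) (simp add: power2_eq_square algebra_simps)
    also have "\<dots> = (\<Sum>i<N. (v i)^2) + 2 * h * (\<Sum>i<N. v i * (D i - Dbar)) + h^2 * (\<Sum>i<N. (D i - Dbar)^2)"
      by (simp add: sum.distrib sum_distrib_left)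
    finally show ?thesis .
  qed
  have cross1: "(\<Sum>i<N. v i * (D i - Dbar)) = (\<Sum>i<N. v i * D i)"
  proof -
    have "(\<Sum>i<N. v i * (D i - Dbar)) = (\<Sum>i<N. v i * D i) - Dbar * (\<Sum>i<N. v i)"
      by (simp add: right_diff_distrib sum_subtractf sum_distrib_left mult.commute)
    thus ?thesis using sv0 by simp
  qed
  have Deq: "D i = Eb i - Lf E N v i" if "i < N" for i
  proof -
    have "D i = (\<Sum>j\<in>nbrs E N i. e (i,j) - (y i - y j))"
      unfolding D_def e_def by (intro sum.cong) auto
    also have "\<dots> = Eb i - Lf E N y i" unfolding Eb_def Lf_nbrs by (simp add: sum_subtractf)
    also have "Lf E N y i = Lf E N v i" unfolding v_def Lf_shift ..
    finally show ?thesis .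
  qed
  have cross2: "(\<Sum>i<N. v i * D i) = (\<Sum>i<N. v i * gg i) - Qf E N v"
  proof -
    have "(\<Sum>i<N. v i * D i) = (\<Sum>i<N. v i * Eb i) - Qf E N v"
      unfolding Qf_def by (simp add: Deq right_diff_distrib sum_subtractf)
    moreover have "(\<Sum>i<N. v i * gg i) = (\<Sum>i<N. v i * Eb i)"
    proof -
      define c where "c = (1 / real N) * (\<Sum>p\<in>pairs E N. e p)"
      have "(\<Sum>i<N. v i * gg i) = (\<Sum>i<N. v i * (Eb i - c))" unfolding gg_def c_def ..
      also have "\<dots> = (\<Sum>i<N. v i * Eb i) - c * (\<Sum>i<N. v i)"
        by (simp add: right_diff_distrib sum_subtractf sum_distrib_left mult.commute)
      finally have "(\<Sum>i<N. v i * gg i) = (\<Sum>i<N. v i * Eb i) - c * (\<Sum>i<N. v i)" .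
      thus ?thesis using sv0 by simp
    qed
    ultimately show ?thesis by simp
  qed
  have am: "2 * (\<Sum>i<N. v i * gg i) \<le> lam * (\<Sum>i<N. (v i)^2) + (\<Sum>i<N. (gg i)^2) / lam"
  proof -
    have "2 * (\<Sum>i<N. v i * gg i) = (\<Sum>i<N. 2 * v i * gg i)" by (simp add: sum_distrib_left mult.assoc)
    also have "\<dots> \<le> (\<Sum>i<N. lam * (v i)^2 + (gg i)^2 / lam)" by (intro sum_mono amgm lam)
    also have "\<dots> = lam * (\<Sum>i<N. (v i)^2) + (\<Sum>i<N. (gg i)^2) / lam"
      by (simp add: sum.distrib sum_distrib_left sum_divide_distrib)
    finally show ?thesis .
  qed
  have gb: "(\<Sum>i<N. (gg i)^2) \<le> lambdaG E N * (\<Sum>i<N. \<Sum>j\<in>nbrs E N i. (z i j - y j)^2)"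
  proof -
    have "(\<Sum>i<N. (gg i)^2) \<le> lambdaG E N * (\<Sum>p\<in>pairs E N. (e p)^2)"
      unfolding gg_def Eb_def by (rule lambdaG_bound)
    also have "(\<Sum>p\<in>pairs E N. (e p)^2) = (\<Sum>i<N. \<Sum>j\<in>nbrs E N i. (z i j - y j)^2)"
      unfolding sum_pairs e_def by simp
    finally show ?thesis .
  qed
  have Qb: "Qf E N v \<ge> lam * (\<Sum>i<N. (v i)^2)" by (rule Qb0[OF sv0])
  have Dab: "\<bar>D i\<bar> \<le> real N * (2 * M)" if i: "i < N" for i
    unfolding D_def
  proof (rule abs_sum_nbrs_le)
    show "0 \<le> 2 * M" using M by simp
    fix j assume j: "j \<in> nbrs E N i"
    hence "(i,j) \<in> pairs E N" using i unfolding pairs_def by auto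
    hence "\<bar>z i j\<bar> \<le> M" by (rule zb)
    thus "\<bar>z i j - y i\<bar> \<le> 2 * M" using yb[OF i] by simp
  qed
  have Dbarb: "\<bar>Dbar\<bar> \<le> real N * (2 * M)"
  proof -
    have "\<bar>\<Sum>l<N. D l\<bar> \<le> (\<Sum>l<N. \<bar>D l\<bar>)" by (rule sum_abs)
    also have "\<dots> \<le> (\<Sum>l<N. real N * (2 * M))" by (intro sum_mono Dab) simp
    also have "\<dots> = real N * (real N * (2 * M))" by simp
    finally have "\<bar>\<Sum>l<N. D l\<bar> \<le> real N * (real N * (2 * M))" .
    thus ?thesis unfolding Dbar_def using Npos by (simp add: abs_mult divide_le_eq mult.commute)
  qed
  have Db: "(\<Sum>i<N. (D i - Dbar)^2) \<le> 16 * real N^3 * M^2"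
  proof -
    have "(\<Sum>i<N. (D i - Dbar)^2) \<le> (\<Sum>i<N. (real N * (4 * M))^2)"
    proof (intro sum_mono sq_le_of_abs)
      fix i assume "i \<in> {..<N}"
      hence "\<bar>D i\<bar> \<le> real N * (2 * M)" using Dab by simp
      thus "\<bar>D i - Dbar\<bar> \<le> real N * (4 * M)" using Dbarb by simp
    qed
    also have "\<dots> = 16 * real N^3 * M^2" by (simp add: power2_eq_square power3_eq_cube)
    finally show ?thesis .
  qed
  define A where "A = (\<Sum>i<N. (v i)^2)"
  define Es where "Es = (\<Sum>i<N. \<Sum>j\<in>nbrs E N i. (z i j - y j)^2)"
  define X where "X = (\<Sum>i<N. v i * gg i)"
  define Gs where "Gs = (\<Sum>i<N. (gg i)^2)"
  define Dd where "Dd = (\<Sum>i<N. (D i - Dbar)^2)"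
  have eqL: "(\<Sum>i<N. (y' i - (1/real N) * (\<Sum>l<N. y' l))^2) = A + 2 * h * (X - Qf E N v) + h^2 * Dd"
    unfolding LHS cross1 cross2 A_def X_def Dd_def ..
  have i1: "2 * h * X \<le> h * (lam * A + lambdaG E N * Es / lam)"
  proof -
    have "Gs / lam \<le> lambdaG E N * Es / lam" using gb lam unfolding Gs_def Es_def by (simp add: divide_right_mono)
    hence "2 * X \<le> lam * A + lambdaG E N * Es / lam" using am unfolding X_def A_def Gs_def by simp
    from mult_left_mono[OF this h] show ?thesis by (simp add: algebra_simps)
  qed
  have i2: "h * (lam * A) \<le> h * Qf E N v" using mult_left_mono[OF Qb h] unfolding A_def .
  have i3: "h^2 * Dd \<le> h^2 * (16 * real N^3 * M^2)" using Db unfolding Dd_def by (intro mult_left_mono) auto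
  have "(\<Sum>i<N. (y' i - (1/real N) * (\<Sum>l<N. y' l))^2) \<le> (1 - h * lam) * A + h * lambdaG E N / lam * Es + h^2 * (16 * real N^3 * M^2)"
    unfolding eqL using i1 i2 i3 by (simp add: algebra_simps)
  thus ?thesis unfolding A_def Es_def lam_def v_def ybar_def .
qed




lemma rowmul_sys:
  assumes n: "n = Suc n'" "n' \<ge> 1"
  shows "rowmul n (K2 n b) (sys_step n a v w) = (\<Sum>k=1..n'. b k * v (Suc k)) + (\<Sum>l=1..n. a l * v l) + w"
proof -
  have "rowmul n (K2 n b) (sys_step n a v w) = (\<Sum>k=1..n'. K2 n b k * sys_step n a v w k) + K2 n b n * sys_step n a v w n"
    unfolding rowmul_def n(1) using n(2) by (simp add: sum.cl_ivl_Suc)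
  also have "(\<Sum>k=1..n'. K2 n b k * sys_step n a v w k) = (\<Sum>k=1..n'. b k * v (Suc k))"
    using n by (intro sum.cong) (auto simp: K2_def sys_step_def)
  also have "K2 n b n * sys_step n a v w n = (\<Sum>l=1..n. a l * v l) + w"
    by (simp add: K2_def sys_step_def)
  finally show ?thesis by simp
qed

lemma rowmul_K21:
  assumes n: "n = Suc n'" "n' \<ge> 1"
  shows "rowmul n (K2 n b) v - rowmul n (K1 n a b) v = (\<Sum>k=1..n'. b k * v (Suc k)) + (\<Sum>l=1..n. a l * v l)"
proof -
  have c: "K2 n b k - K1 n a b k = a k + (if k = 1 then 0 else b (k - 1))" if "k \<in> {1..n}" for k
    using that n by (auto simp: K2_def K1_def)
  have "rowmul n (K2 n b) v - rowmul n (K1 n a b) v = (\<Sum>k=1..n. (K2 n b k - K1 n a b k) * v k)"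
    unfolding rowmul_def by (simp add: sum_subtractf[symmetric] left_diff_distrib)
  also have "\<dots> = (\<Sum>k=1..n. a k * v k) + (\<Sum>k=1..n. (if k = 1 then 0 else b (k - 1)) * v k)"
    unfolding sum.distrib[symmetric] by (intro sum.cong) (auto simp: c distrib_right)
  also have "(\<Sum>k=1..n. (if k = 1 then 0 else b (k - 1)) * v k) = (\<Sum>k=Suc 1..n. (if k = 1 then 0 else b (k - 1)) * v k)"
    using n by (subst sum.atLeast_Suc_atMost) auto
  also have "\<dots> = (\<Sum>k=Suc 1..Suc n'. b (k - 1) * v k)" using n by (intro sum.cong) auto
  also have "\<dots> = (\<Sum>k=1..n'. b k * v (Suc k))" by (subst sum.shift_bounds_cl_Suc_ivl) simp
  finally show ?thesis by simp
qed

lemma rowmul_cong: "(\<And>k. k \<in> {1..n} \<Longrightarrow> v k = w k) \<Longrightarrow> rowmul n K v = rowmul n K w"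
  unfolding rowmul_def by simp

lemma normal_cdf_mono: assumes "\<sigma> > 0" shows "mono (normal_cdf \<sigma>)"
proof (rule monoI)
  fix x y :: real assume "x \<le> y"
  interpret p: prob_space "density lborel (normal_density 0 \<sigma>)"
    by (rule prob_space_normal_density[OF assms])
  show "normal_cdf \<sigma> x \<le> normal_cdf \<sigma> y" unfolding normal_cdf_def
    using \<open>x \<le> y\<close> by (intro p.finite_measure_mono) auto
qed

theorem lemma3:
  fixes P :: "'w measure"
    and n N t0 :: nat
    and a b :: "nat \<Rightarrow> real"
    and E :: "nat \<Rightarrow> nat \<Rightarrow> bool"
    and c :: "nat \<Rightarrow> nat \<Rightarrow> real"
    and \<sigma> \<beta> \<gamma> Mb :: real
    and x0 :: "nat \<Rightarrow> nat \<Rightarrow> real"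
    and z0 :: "nat \<Rightarrow> nat \<Rightarrow> real"
    and d :: "nat \<Rightarrow> nat \<Rightarrow> nat \<Rightarrow> 'w \<Rightarrow> real"
    and x :: "nat \<Rightarrow> nat \<Rightarrow> 'w \<Rightarrow> nat \<Rightarrow> real"
    and u :: "nat \<Rightarrow> nat \<Rightarrow> 'w \<Rightarrow> real"
    and zh :: "nat \<Rightarrow> nat \<Rightarrow> nat \<Rightarrow> 'w \<Rightarrow> real"
  assumes n2: "n \<ge> 2" and N2: "N \<ge> 2"
    and graph: "undirected_connected_graph E N"
    and prob: "prob_space P"
    and sigma_pos: "\<sigma> > 0"
    and noise_normal: "\<And>i j t. (i, j) \<in> pairs E N \<Longrightarrow>
           distributed P lborel (d i j t) (\<lambda>y. ennreal (normal_density 0 \<sigma> y))"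
    and noise_indep: "prob_space.indep_vars P (\<lambda>_. borel) (\<lambda>(i, j, t). d i j t)
           {(i, j, t). (i, j) \<in> pairs E N}"
    and beta_pos: "\<beta> > 0" and gamma_pos: "\<gamma> > 0"
    and t0_bound: "real t0 > \<gamma> * real (dmax E N) - 1"
    and Mb_pos: "Mb > 0"
    and x0_bound: "\<And>i. i < N \<Longrightarrow> \<bar>rowmul n (K2 n b) (x0 i)\<bar> \<le> Mb"
    and z0_bound: "\<And>i j. (i, j) \<in> pairs E N \<Longrightarrow> \<bar>z0 i j\<bar> \<le> Mb"
    and x_init: "\<And>i \<omega> k. i < N \<Longrightarrow> \<omega> \<in> space P \<Longrightarrow> k \<in> {1..n} \<Longrightarrow>
           x i (t0 + 1) \<omega> k = x0 i k"
    and x_step: "\<And>i t \<omega> k. i < N \<Longrightarrow> t \<ge> t0 + 1 \<Longrightarrow> \<omega> \<in> space P \<Longrightarrow> k \<in> {1..n} \<Longrightarrow>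
           x i (t + 1) \<omega> k = sys_step n a (x i t \<omega>) (u i t \<omega>) k"
    and u_def: "\<And>i t \<omega>. i < N \<Longrightarrow> t \<ge> t0 + 1 \<Longrightarrow> \<omega> \<in> space P \<Longrightarrow>
           u i t \<omega> = rowmul n (K1 n a b) (x i t \<omega>)
             + \<gamma> / (real t + 1) * (\<Sum>j\<in>nbrs E N i. zh i j t \<omega> - rowmul n (K2 n b) (x i t \<omega>))"
    and zh_init: "\<And>i j \<omega>. (i, j) \<in> pairs E N \<Longrightarrow> \<omega> \<in> space P \<Longrightarrow> zh i j t0 \<omega> = z0 i j"
    and zh_step: "\<And>i j t \<omega>. (i, j) \<in> pairs E N \<Longrightarrow> t \<ge> t0 + 1 \<Longrightarrow> \<omega> \<in> space P \<Longrightarrow>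
           zh i j t \<omega> = proj Mb (zh i j (t - 1) \<omega> + \<beta> / real t *
              (normal_cdf \<sigma> (c i j - zh i j (t - 1) \<omega>)
               - (if rowmul n (K2 n b) (x j t \<omega>) + d i j t \<omega> \<le> c i j then 1 else 0)))"
  defines "V \<equiv> \<lambda>t. \<Sum>i<N. integral\<^sup>L P (\<lambda>\<omega>. (rowmul n (K2 n b) (x i t \<omega>)
                   - (1 / real N) * (\<Sum>l<N. rowmul n (K2 n b) (x l t \<omega>)))\<^sup>2)"
    and "R \<equiv> \<lambda>t. \<Sum>i<N. \<Sum>j\<in>nbrs E N i. integral\<^sup>L P (\<lambda>\<omega>. (zh i j t \<omega> - rowmul n (K2 n b) (x j t \<omega>))\<^sup>2)"
  shows "\<exists>C \<ge> 0. \<forall>t \<ge> t0 + 2.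
           V t \<le> (1 - \<gamma> * lambda2 E N / real t) * V (t - 1)
                  + \<gamma> * lambdaG E N / (real t * lambda2 E N) * R (t - 1) + C / (real t)\<^sup>2"
proof -
  interpret P: prob_space P by (rule prob)
  have sym: "\<And>i j. E i j \<Longrightarrow> E j i" and irr: "\<And>i. \<not> E i i"
    using graph unfolding undirected_connected_graph_def by auto
  define Y where "Y i t \<omega> = rowmul n (K2 n b) (x i t \<omega>)" for i t \<omega>
  obtain n' where n': "n = Suc n'" "n' \<ge> 1" using n2 by (cases n) auto
  have rec: "Y i (t + 1) \<omega> = Y i t \<omega> + \<gamma> / (real t + 1) * (\<Sum>j\<in>nbrs E N i. zh i j t \<omega> - Y i t \<omega>)"
    if i: "i < N" and t: "t \<ge> t0 + 1" and \<omega>: "\<omega> \<in> space P" for i t \<omega>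
  proof -
    have "Y i (t + 1) \<omega> = rowmul n (K2 n b) (sys_step n a (x i t \<omega>) (u i t \<omega>))"
      unfolding Y_def by (rule rowmul_cong) (use x_step[OF i t \<omega>] in auto)
    also have "\<dots> = (\<Sum>k=1..n'. b k * x i t \<omega> (Suc k)) + (\<Sum>l=1..n. a l * x i t \<omega> l) + u i t \<omega>"
      by (rule rowmul_sys[OF n'])
    also have "(\<Sum>k=1..n'. b k * x i t \<omega> (Suc k)) + (\<Sum>l=1..n. a l * x i t \<omega> l)
        = Y i t \<omega> - rowmul n (K1 n a b) (x i t \<omega>)" unfolding Y_def by (rule rowmul_K21[OF n', symmetric])
    finally show ?thesis unfolding u_def[OF i t \<omega>] Y_def by simp
  qed
  have proj_bnd: "\<bar>proj Mb r\<bar> \<le> Mb" for r unfolding proj_def using Mb_pos by auto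
  have zb: "\<bar>zh i j t \<omega>\<bar> \<le> Mb" if p: "(i,j) \<in> pairs E N" and t: "t \<ge> t0" and \<omega>: "\<omega> \<in> space P" for i j t \<omega>
  proof (cases "t = t0")
    case True thus ?thesis using zh_init[OF p \<omega>] z0_bound[OF p] by simp
  next
    case False hence "t \<ge> t0 + 1" using t by simp
    thus ?thesis using zh_step[OF p _ \<omega>] proj_bnd by simp
  qed
  have dle: "card (nbrs E N i) \<le> dmax E N" if "i < N" for i
    unfolding dmax_def using that by (intro Max_ge) auto
  have yb: "\<bar>Y i t \<omega>\<bar> \<le> Mb" if t: "t \<ge> t0 + 1" and i: "i < N" and \<omega>: "\<omega> \<in> space P" for i t \<omega>
    using t i
  proof (induction t arbitrary: i rule: nat_induct_at_least)
    case base
    have "Y i (t0 + 1) \<omega> = rowmul n (K2 n b) (x0 i)"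
      unfolding Y_def by (rule rowmul_cong) (use x_init[OF base \<omega>] in auto)
    thus ?case using x0_bound[OF base] by simp
  next
    case (Suc t)
    define c where "c = \<gamma> / (real t + 1)"
    define d where "d = real (card (nbrs E N i))"
    have cpos: "c > 0" unfolding c_def using gamma_pos by simp
    have d0: "d \<ge> 0" unfolding d_def by simp
    have cd: "c * d \<le> 1"
    proof -
      have "\<gamma> * d \<le> \<gamma> * real (dmax E N)" unfolding d_def using dle[OF Suc.prems] gamma_pos by simp
      also have "\<dots> < real t0 + 1" using t0_bound by simp
      also have "\<dots> \<le> real t + 1" using Suc.hyps by simp
      finally have "\<gamma> * d \<le> real t + 1" by simp
      thus ?thesis unfolding c_def by (simp add: divide_le_eq)
    qed
    have pe: "(i,j) \<in> pairs E N" if "j \<in> nbrs E N i" for j using that Suc.prems unfolding pairs_def by auto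
    have sz: "\<bar>\<Sum>j\<in>nbrs E N i. zh i j t \<omega>\<bar> \<le> d * Mb"
    proof -
      have "\<bar>\<Sum>j\<in>nbrs E N i. zh i j t \<omega>\<bar> \<le> (\<Sum>j\<in>nbrs E N i. \<bar>zh i j t \<omega>\<bar>)" by (rule sum_abs)
      also have "\<dots> \<le> (\<Sum>j\<in>nbrs E N i. Mb)" using zb[OF pe _ \<omega>] Suc.hyps by (intro sum_mono) auto
      finally show ?thesis unfolding d_def by simp
    qed
    have eq: "Y i (Suc t) \<omega> = (1 - c * d) * Y i t \<omega> + c * (\<Sum>j\<in>nbrs E N i. zh i j t \<omega>)"
      using rec[OF Suc.prems _ \<omega>, of t] Suc.hyps unfolding c_def d_def
      by (simp add: sum_subtractf algebra_simps)
    have "\<bar>Y i (Suc t) \<omega>\<bar> \<le> (1 - c * d) * \<bar>Y i t \<omega>\<bar> + c * \<bar>\<Sum>j\<in>nbrs E N i. zh i j t \<omega>\<bar>"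
      unfolding eq using cd cpos by (simp add: abs_mult abs_triangle_ineq order_trans[OF abs_triangle_ineq])
    also have "\<dots> \<le> (1 - c * d) * Mb + c * (d * Mb)"
      using Suc.IH[OF Suc.prems] sz cd cpos by (intro add_mono mult_left_mono) auto
    also have "\<dots> = Mb" by (simp add: algebra_simps)
    finally show ?case .
  qed
  have dmeas: "(\<lambda>\<omega>. d i j t \<omega>) \<in> borel_measurable P" if "(i,j) \<in> pairs E N" for i j t
    using distributed_measurable[OF noise_normal[OF that, of t]] by simp
  have cdf_meas: "normal_cdf \<sigma> \<in> borel_measurable borel"
    by (rule borel_measurable_mono[OF normal_cdf_mono[OF sigma_pos]])
  have zh_meas_step: "(\<lambda>\<omega>. zh i j t \<omega>) \<in> borel_measurable P"
    if p: "(i,j) \<in> pairs E N" and t: "t \<ge> t0 + 1"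
      and m1: "(\<lambda>\<omega>. zh i j (t - 1) \<omega>) \<in> borel_measurable P"
      and m2: "(\<lambda>\<omega>. Y j t \<omega>) \<in> borel_measurable P" for i j t
  proof -
    let ?g = "\<lambda>\<omega>. proj Mb (zh i j (t - 1) \<omega> + \<beta> / real t *
              (normal_cdf \<sigma> (c i j - zh i j (t - 1) \<omega>)
               - (if Y j t \<omega> + d i j t \<omega> \<le> c i j then 1 else 0)))"
    have "?g \<in> borel_measurable P"
    proof -
      have a: "(\<lambda>\<omega>. normal_cdf \<sigma> (c i j - zh i j (t - 1) \<omega>)) \<in> borel_measurable P"
        by (rule measurable_compose[OF _ cdf_meas]) (intro borel_measurable_diff borel_measurable_const m1)
      have "{\<omega> \<in> space P. Y j t \<omega> + d i j t \<omega> \<le> c i j} \<in> sets P"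
        using m2 dmeas[OF p] by measurable
      hence b: "(\<lambda>\<omega>. if Y j t \<omega> + d i j t \<omega> \<le> c i j then 1 else 0::real) \<in> borel_measurable P"
        by (intro measurable_If measurable_const) auto
      show ?thesis unfolding proj_def
        by (intro borel_measurable_max borel_measurable_min borel_measurable_const borel_measurable_add
            borel_measurable_times borel_measurable_diff m1 a b)
    qed
    moreover have "\<And>\<omega>. \<omega> \<in> space P \<Longrightarrow> zh i j t \<omega> = ?g \<omega>"
      using zh_step[OF p t] unfolding Y_def by simp
    ultimately show ?thesis using measurable_cong by (metis (no_types, lifting))
  qed
  have meas: "(\<forall>i<N. (\<lambda>\<omega>. Y i t \<omega>) \<in> borel_measurable P) \<and>
              (\<forall>i j. (i,j) \<in> pairs E N \<longrightarrow> (\<lambda>\<omega>. zh i j t \<omega>) \<in> borel_measurable P)"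
    if t: "t \<ge> t0 + 1" for t
    using t
  proof (induction t rule: nat_induct_at_least)
    case base
    have Ym: "(\<lambda>\<omega>. Y i (t0 + 1) \<omega>) \<in> borel_measurable P" if i: "i < N" for i
    proof -
      have "\<And>\<omega>. \<omega> \<in> space P \<Longrightarrow> Y i (t0 + 1) \<omega> = rowmul n (K2 n b) (x0 i)"
        unfolding Y_def by (rule rowmul_cong) (use x_init[OF i] in auto)
      thus ?thesis using measurable_cong[of P "\<lambda>\<omega>. Y i (t0 + 1) \<omega>" "\<lambda>_. rowmul n (K2 n b) (x0 i)"] by simp
    qed
    have Zm: "(\<lambda>\<omega>. zh i j (t0 + 1) \<omega>) \<in> borel_measurable P" if p: "(i,j) \<in> pairs E N" for i j
    proof (rule zh_meas_step[OF p])
      have "j < N" using p unfolding pairs_def nbrs_def by auto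
      thus "(\<lambda>\<omega>. Y j (t0 + 1) \<omega>) \<in> borel_measurable P" by (rule Ym)
      have "\<And>\<omega>. \<omega> \<in> space P \<Longrightarrow> zh i j (t0 + 1 - 1) \<omega> = z0 i j" using zh_init[OF p] by simp
      thus "(\<lambda>\<omega>. zh i j (t0 + 1 - 1) \<omega>) \<in> borel_measurable P"
        using measurable_cong[of P "\<lambda>\<omega>. zh i j (t0 + 1 - 1) \<omega>" "\<lambda>_. z0 i j"] by simp
    qed simp
    show ?case using Ym Zm by auto
  next
    case (Suc t)
    have Ym: "(\<lambda>\<omega>. Y i (Suc t) \<omega>) \<in> borel_measurable P" if i: "i < N" for i
    proof -
      have "\<And>\<omega>. \<omega> \<in> space P \<Longrightarrow> Y i (Suc t) \<omega> = Y i t \<omega> + \<gamma> / (real t + 1) * (\<Sum>j\<in>nbrs E N i. zh i j t \<omega> - Y i t \<omega>)"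
        using rec[OF i Suc.hyps(1)] by simp
      moreover have "(\<lambda>\<omega>. Y i t \<omega> + \<gamma> / (real t + 1) * (\<Sum>j\<in>nbrs E N i. zh i j t \<omega> - Y i t \<omega>)) \<in> borel_measurable P"
      proof -
        have pe: "(i,j) \<in> pairs E N" if "j \<in> nbrs E N i" for j using that i unfolding pairs_def by auto
        show ?thesis using Suc.IH i pe
          by (intro borel_measurable_add borel_measurable_times borel_measurable_const borel_measurable_sum
              borel_measurable_diff) auto
      qed
      ultimately show ?thesis using measurable_cong by (metis (no_types, lifting))
    qed
    have Zm: "(\<lambda>\<omega>. zh i j (Suc t) \<omega>) \<in> borel_measurable P" if p: "(i,j) \<in> pairs E N" for i j
    proof (rule zh_meas_step[OF p])
      have "j < N" using p unfolding pairs_def nbrs_def by auto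
      thus "(\<lambda>\<omega>. Y j (Suc t) \<omega>) \<in> borel_measurable P" by (rule Ym)
      show "(\<lambda>\<omega>. zh i j (Suc t - 1) \<omega>) \<in> borel_measurable P" using Suc.IH p by simp
    qed (use Suc.hyps in simp)
    show ?case using Ym Zm by auto
  qed
  have bint: "integrable P h" if "h \<in> borel_measurable P" and "\<And>\<omega>. \<omega> \<in> space P \<Longrightarrow> \<bar>h \<omega>\<bar> \<le> B" for h :: "'w \<Rightarrow> real" and B :: real
    by (rule P.integrable_const_bound[where B=B]) (use that in \<open>auto intro: AE_I2\<close>)
  define avg where "avg t \<omega> = (1 / real N) * (\<Sum>l<N. Y l t \<omega>)" for t \<omega>
  have avgb: "\<bar>avg t \<omega>\<bar> \<le> Mb" if "t \<ge> t0 + 1" "\<omega> \<in> space P" for t \<omega>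
  proof -
    have "\<bar>\<Sum>l<N. Y l t \<omega>\<bar> \<le> (\<Sum>l<N. \<bar>Y l t \<omega>\<bar>)" by (rule sum_abs)
    also have "\<dots> \<le> (\<Sum>l<N. Mb)" using yb that by (intro sum_mono) auto
    finally have "\<bar>\<Sum>l<N. Y l t \<omega>\<bar> \<le> real N * Mb" by simp
    thus ?thesis unfolding avg_def using N2 by (simp add: abs_mult divide_le_eq mult.commute)
  qed
  have avgm: "(\<lambda>\<omega>. avg t \<omega>) \<in> borel_measurable P" if "t \<ge> t0 + 1" for t
    unfolding avg_def using meas[OF that] by (intro borel_measurable_times borel_measurable_const borel_measurable_sum) auto
  have int1: "integrable P (\<lambda>\<omega>. (Y i t \<omega> - avg t \<omega>)^2)" if t: "t \<ge> t0 + 1" and i: "i < N" for i t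
  proof (rule bint[of _ "(2 * Mb)^2"])
    show "(\<lambda>\<omega>. (Y i t \<omega> - avg t \<omega>)^2) \<in> borel_measurable P"
      using meas[OF t] avgm[OF t] i by (intro borel_measurable_power borel_measurable_diff) auto
    fix \<omega> assume \<omega>: "\<omega> \<in> space P"
    have "\<bar>Y i t \<omega> - avg t \<omega>\<bar> \<le> 2 * Mb" using yb[OF t i \<omega>] avgb[OF t \<omega>] by simp
    hence "(Y i t \<omega> - avg t \<omega>)^2 \<le> (2 * Mb)^2" by (rule sq_le_of_abs)
    thus "\<bar>(Y i t \<omega> - avg t \<omega>)^2\<bar> \<le> (2 * Mb)^2" by simp
  qed
  have int2: "integrable P (\<lambda>\<omega>. (zh i j t \<omega> - Y j t \<omega>)^2)" if t: "t \<ge> t0 + 1" and p: "(i,j) \<in> pairs E N" for i j t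
  proof (rule bint[of _ "(2 * Mb)^2"])
    have j: "j < N" using p unfolding pairs_def nbrs_def by auto
    show "(\<lambda>\<omega>. (zh i j t \<omega> - Y j t \<omega>)^2) \<in> borel_measurable P"
      using meas[OF t] j p by (intro borel_measurable_power borel_measurable_diff) auto
    fix \<omega> assume \<omega>: "\<omega> \<in> space P"
    have "\<bar>zh i j t \<omega>\<bar> \<le> Mb" by (rule zb[OF p]) (use t \<omega> in auto)
    hence "\<bar>zh i j t \<omega> - Y j t \<omega>\<bar> \<le> 2 * Mb" using yb[OF t j \<omega>] by simp
    hence "(zh i j t \<omega> - Y j t \<omega>)^2 \<le> (2 * Mb)^2" by (rule sq_le_of_abs)
    thus "\<bar>(zh i j t \<omega> - Y j t \<omega>)^2\<bar> \<le> (2 * Mb)^2" by simp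
  qed
  define f where "f t \<omega> = (\<Sum>i<N. (Y i t \<omega> - avg t \<omega>)^2)" for t \<omega>
  define gR where "gR t \<omega> = (\<Sum>i<N. \<Sum>j\<in>nbrs E N i. (zh i j t \<omega> - Y j t \<omega>)^2)" for t \<omega>
  have pe: "(i,j) \<in> pairs E N" if "i < N" "j \<in> nbrs E N i" for i j using that unfolding pairs_def by auto
  have intf: "integrable P (f t)" if "t \<ge> t0 + 1" for t
    unfolding f_def[abs_def] by (rule Bochner_Integration.integrable_sum) (use int1[OF that] in auto)
  have intg: "integrable P (gR t)" if "t \<ge> t0 + 1" for t
    unfolding gR_def[abs_def] by (intro Bochner_Integration.integrable_sum) (use int2[OF that] pe in auto)
  have Vf: "V t = integral\<^sup>L P (f t)" if "t \<ge> t0 + 1" for t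
    unfolding V_def f_def[abs_def] Y_def[symmetric] avg_def[symmetric]
    using int1[OF that] by (subst Bochner_Integration.integral_sum) auto
  have Rg: "R t = integral\<^sup>L P (gR t)" if "t \<ge> t0 + 1" for t
  proof -
    have "R t = (\<Sum>i<N. \<Sum>j\<in>nbrs E N i. integral\<^sup>L P (\<lambda>\<omega>. (zh i j t \<omega> - Y j t \<omega>)^2))"
      unfolding R_def Y_def ..
    also have "\<dots> = (\<Sum>i<N. integral\<^sup>L P (\<lambda>\<omega>. \<Sum>j\<in>nbrs E N i. (zh i j t \<omega> - Y j t \<omega>)^2))"
      using int2[OF that] pe by (intro sum.cong refl, subst Bochner_Integration.integral_sum) auto
    also have "\<dots> = integral\<^sup>L P (gR t)"
      unfolding gR_def[abs_def] using int2[OF that] pe by (subst Bochner_Integration.integral_sum) (auto intro!: Bochner_Integration.integrable_sum)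
    finally show ?thesis .
  qed
  define K where "K = 16 * real N^3 * Mb^2"
  define C where "C = \<gamma>^2 * K"
  show ?thesis
  proof (intro exI[of _ C] conjI allI impI)
    show "C \<ge> 0" unfolding C_def K_def by simp
    fix t assume t: "t \<ge> t0 + 2"
    obtain s where ts: "t = Suc s" and s: "s \<ge> t0 + 1" using t by (cases t) auto
    define h where "h = \<gamma> / real t"
    have h0: "h \<ge> 0" unfolding h_def using gamma_pos by simp
    have pw: "f t \<omega> \<le> (1 - h * lambda2 E N) * f s \<omega> + h * lambdaG E N / lambda2 E N * gR s \<omega> + h^2 * K"
      if \<omega>: "\<omega> \<in> space P" for \<omega>
    proof -
      have "(\<Sum>i<N. (Y i t \<omega> - (1/real N) * (\<Sum>l<N. Y l t \<omega>))^2)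
         \<le> (1 - h * lambda2 E N) * (\<Sum>i<N. (Y i s \<omega> - (1/real N) * (\<Sum>l<N. Y l s \<omega>))^2)
            + h * lambdaG E N / lambda2 E N * (\<Sum>i<N. \<Sum>j\<in>nbrs E N i. (zh i j s \<omega> - Y j s \<omega>)^2)
            + h^2 * (16 * real N^3 * Mb^2)"
      proof (rule pathwise[OF graph N2 h0, where M=Mb])
        show "0 \<le> Mb" using Mb_pos by simp
        show "\<bar>Y i s \<omega>\<bar> \<le> Mb" if "i < N" for i using yb[OF s that \<omega>] .
        show "\<bar>zh i j s \<omega>\<bar> \<le> Mb" if "(i,j) \<in> pairs E N" for i j by (rule zb[OF that]) (use s \<omega> in auto)
        show "Y i t \<omega> = Y i s \<omega> + h * (\<Sum>j\<in>nbrs E N i. zh i j s \<omega> - Y i s \<omega>)" if "i < N" for i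
          using rec[OF that s \<omega>] unfolding h_def ts by (simp add: add.commute)
      qed
      thus ?thesis unfolding f_def avg_def gR_def K_def .
    qed
    have "integral\<^sup>L P (f t) \<le> integral\<^sup>L P (\<lambda>\<omega>. (1 - h * lambda2 E N) * f s \<omega> + h * lambdaG E N / lambda2 E N * gR s \<omega> + h^2 * K)"
      using intf[of t] intf[OF s] intg[OF s] pw t
      by (intro integral_mono) auto
    also have "\<dots> = (1 - h * lambda2 E N) * integral\<^sup>L P (f s) + h * lambdaG E N / lambda2 E N * integral\<^sup>L P (gR s) + h^2 * K"
      using intf[OF s] intg[OF s] P.prob_space by simp
    finally have "V t \<le> (1 - h * lambda2 E N) * V s + h * lambdaG E N / lambda2 E N * R s + h^2 * K"
      using Vf[of t] Vf[OF s] Rg[OF s] t by simp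
    moreover have "h^2 * K = C / (real t)^2" unfolding h_def C_def by (simp add: power_divide)
    moreover have "s = t - 1" using ts by simp
    ultimately show "V t \<le> (1 - \<gamma> * lambda2 E N / real t) * V (t - 1)
                  + \<gamma> * lambdaG E N / (real t * lambda2 E N) * R (t - 1) + C / (real t)\<^sup>2"
      unfolding h_def by (simp add: algebra_simps)
  qed
qed


end
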